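(* Let $\mathcal{B}$ be a finite collection of subsets of $\mathbb{T}$ and let $\mathcal{U}\in\beta\mathbb{N}$ be idempotent. Then there is $\mu\in\mathbb{A}_{\mathcal{U}}$ such that $(\mu\,\hat{}\,\mu)(E)=\mu(E)$ for every $E\in\mathcal{B}$.
   Context: For $a,b\subseteq(0,1]$ put $a\,\hat{}\,b=\tfrac12 a\cup\tfrac12(b+1)$; $\mathbb{T}$ is the set generated from $\mathbf{1}=\{1\}$ by $\hat{}$ (the free binary system on one generator), $\#(t)$ is the cardinality of $t$, $\mathbb{T}_n=\{t:\#(t)=n\}$, and $\mathbb{A}_n$ is the set of probability measures on $\mathbb{T}_n$. For a set $S$, $\Pr(S)$ denotes the set of finitely additive probability measures on $S$, identified with the positive linear functionals $f$ on $\ell^\infty(S)$ with $f(\bar 1)=1$, with the weak* topology; $\mathbb{A}_n\subseteq\Pr(\mathbb{T})$. For $\mu,\nu\in\Pr(\mathbb{T})$, $(\mu\,\hat{}\,\nu)(f)=\int\int f(x\,\hat{}\,y)\,d\nu(y)\,d\mu(x)$. $\mathcal{U}\in\beta\mathbb{N}$ is idempotent if $\mathcal{U}+\mathcal{U}=\mathcal{U}$ for the extended addition ($W\in\mathcal{U}+\mathcal{V}$ iff $\{m:\{n:m+n\in W\}\in\mathcal{V}\}\in\mathcal{U}$). $\mathbb{A}_{\mathcal{U}}$ is the set of $\mu\in\Pr(\mathbb{T})$ such that for every weak*-open $W\ni\mu$, $\{m\in\mathbb{N}:W\cap\mathbb{A}_m\neq\emptyset\}\in\mathcal{U}$. *)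

theory Defs
  imports "HOL-Analysis.Analysis"
begin

definition hat :: "real set \<Rightarrow> real set \<Rightarrow> real set" where
  "hat a b = (\<lambda>x. x / 2) ` a \<union> (\<lambda>x. (x + 1) / 2) ` b"

inductive_set TT :: "real set set" where
  one: "{1} \<in> TT"
| hat: "a \<in> TT \<Longrightarrow> b \<in> TT \<Longrightarrow> hat a b \<in> TT"

definition TT_n :: "nat \<Rightarrow> real set set" where
  "TT_n n = {t \<in> TT. card t = n}"

definition linfty :: "(real set \<Rightarrow> real) set" where
  "linfty = {f. f \<in> extensional TT \<and> bounded (f ` TT)}"

definition PrT :: "((real set \<Rightarrow> real) \<Rightarrow> real) set" where
  "PrT = {\<mu>. \<mu> \<in> linfty \<rightarrow>\<^sub>E UNIV
     \<and> (\<forall>f\<in>linfty. \<forall>g\<in>linfty. \<forall>a b. \<mu> (restrict (\<lambda>t. a * f t + b * g t) TT) = a * \<mu> f + b * \<mu> g)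
     \<and> (\<forall>f\<in>linfty. (\<forall>t\<in>TT. 0 \<le> f t) \<longrightarrow> 0 \<le> \<mu> f)
     \<and> \<mu> (restrict (\<lambda>_. 1) TT) = 1}"

definition weak_star :: "((real set \<Rightarrow> real) \<Rightarrow> real) topology" where
  "weak_star = subtopology (product_topology (\<lambda>_. euclideanreal) linfty) PrT"

definition meas :: "((real set \<Rightarrow> real) \<Rightarrow> real) \<Rightarrow> real set set \<Rightarrow> real" where
  "meas \<mu> E = \<mu> (restrict (indicator E) TT)"

definition hatm :: "((real set \<Rightarrow> real) \<Rightarrow> real) \<Rightarrow> ((real set \<Rightarrow> real) \<Rightarrow> real)
    \<Rightarrow> ((real set \<Rightarrow> real) \<Rightarrow> real)" where
  "hatm \<mu> \<nu> = (\<lambda>f\<in>linfty. \<mu> (restrict (\<lambda>x. \<nu> (restrict (\<lambda>y. f (hat x y)) TT)) TT))"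

definition AA :: "nat \<Rightarrow> ((real set \<Rightarrow> real) \<Rightarrow> real) set" where
  "AA n = {(\<lambda>f\<in>linfty. \<Sum>t\<in>TT_n n. p t * f t) | p.
             (\<forall>t\<in>TT_n n. 0 \<le> p t) \<and> (\<Sum>t\<in>TT_n n. p t) = 1}"

definition Npos :: "nat set" where "Npos = {1..}"

definition ultrafilter_N :: "nat set set \<Rightarrow> bool" where
  "ultrafilter_N U \<longleftrightarrow> U \<subseteq> Pow Npos \<and> Npos \<in> U \<and> {} \<notin> U
     \<and> (\<forall>A\<in>U. \<forall>B\<in>U. A \<inter> B \<in> U)
     \<and> (\<forall>A\<in>U. \<forall>B. A \<subseteq> B \<and> B \<subseteq> Npos \<longrightarrow> B \<in> U)
     \<and> (\<forall>A. A \<subseteq> Npos \<longrightarrow> A \<in> U \<or> Npos - A \<in> U)"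

definition uplus :: "nat set set \<Rightarrow> nat set set \<Rightarrow> nat set set" where
  "uplus U V = {W. W \<subseteq> Npos \<and> {m\<in>Npos. {n\<in>Npos. m + n \<in> W} \<in> V} \<in> U}"

definition idempotent_N :: "nat set set \<Rightarrow> bool" where
  "idempotent_N U \<longleftrightarrow> uplus U U = U"

definition AU :: "nat set set \<Rightarrow> ((real set \<Rightarrow> real) \<Rightarrow> real) set" where
  "AU U = {\<mu>\<in>PrT. \<forall>W. openin weak_star W \<and> \<mu> \<in> W \<longrightarrow> {m\<in>Npos. W \<inter> AA m \<noteq> {}} \<in> U}"

end

theory Submission
  imports Defs "HOL-Homology.Homology"
begin

subsection \<open>Trees\<close>

lemma TT_props: "t \<in> TT \<Longrightarrow> finite t \<and> t \<subseteq> {0<..1} \<and> t \<noteq> {}"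
proof (induction rule: TT.induct)
  case one
  then show ?case by auto
next
  case (hat a b)
  have a: "\<forall>x\<in>a. 0 < x \<and> x \<le> 1" and b: "\<forall>x\<in>b. 0 < x \<and> x \<le> 1"
    using hat by (auto simp: subset_iff)
  have "(\<lambda>x. x / 2) ` a \<subseteq> {0<..1}" using a by auto
  moreover have "(\<lambda>x. (x + 1) / 2) ` b \<subseteq> {0<..1}" using b by auto
  ultimately show ?case using hat by (auto simp: hat_def)
qed

lemma card_hat:
  assumes "a \<subseteq> {0<..1}" "b \<subseteq> {0<..1}" "finite a" "finite b"
  shows "card (hat a b) = card a + card b"
proof -
  have d: "(\<lambda>x. x / 2) ` a \<inter> (\<lambda>x. (x + 1) / 2) ` b = {}"
  proof -
    have "x / 2 \<noteq> (y + 1) / 2" if "x \<in> a" "y \<in> b" for x y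
    proof -
      have "x \<le> 1" "0 < y" using assms(1,2) that by auto
      show ?thesis
      proof
        assume "x / 2 = (y + 1) / 2"
        then have "x = y + 1" by simp
        with \<open>x \<le> 1\<close> \<open>0 < y\<close> show False by linarith
      qed
    qed
    then show ?thesis by blast
  qed
  have i1: "inj_on (\<lambda>x::real. x / 2) a" by (auto simp: inj_on_def)
  have i2: "inj_on (\<lambda>x::real. (x + 1) / 2) b" by (auto simp: inj_on_def)
  show ?thesis unfolding hat_def
    using card_Un_disjoint[OF finite_imageI[OF assms(3)] finite_imageI[OF assms(4)] d]
      card_image[OF i1] card_image[OF i2] by simp
qed

lemma card_hat_TT: "a \<in> TT \<Longrightarrow> b \<in> TT \<Longrightarrow> card (hat a b) = card a + card b"
proof -
  assume "a \<in> TT" "b \<in> TT"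
  then show ?thesis using TT_props[of a] TT_props[of b] by (intro card_hat) auto
qed

lemma card_TT_pos: "t \<in> TT \<Longrightarrow> 1 \<le> card t"
proof -
  assume "t \<in> TT"
  then have "finite t" "t \<noteq> {}" using TT_props by auto
  then show ?thesis by (simp add: Suc_le_eq card_gt_0_iff)
qed

lemma TT_n_sub: "TT_n n \<subseteq> TT"
  by (auto simp: TT_n_def)

lemma TT_n_TT: "t \<in> TT_n n \<Longrightarrow> t \<in> TT"
  by (auto simp: TT_n_def)

lemma hat_TT_n: "x \<in> TT_n n \<Longrightarrow> y \<in> TT_n m \<Longrightarrow> hat x y \<in> TT_n (n + m)"
proof -
  assume "x \<in> TT_n n" "y \<in> TT_n m"
  then have x: "x \<in> TT" "card x = n" and y: "y \<in> TT" "card y = m" by (auto simp: TT_n_def)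
  have "hat x y \<in> TT" using TT.hat[OF x(1) y(1)] .
  moreover have "card (hat x y) = n + m" using card_hat_TT[OF x(1) y(1)] x y by simp
  ultimately show ?thesis by (simp add: TT_n_def)
qed

lemma finite_TT_n: "finite (TT_n N)"
proof (induction N rule: less_induct)
  case (less N)
  have "TT_n N \<subseteq> {{1}} \<union> (\<Union>a\<in>{1..<N}. (\<lambda>(x,y). hat x y) ` (TT_n a \<times> TT_n (N - a)))"
  proof
    fix t assume t: "t \<in> TT_n N"
    then have tT: "t \<in> TT" and ct: "card t = N" by (auto simp: TT_n_def)
    from tT show "t \<in> {{1}} \<union> (\<Union>a\<in>{1..<N}. (\<lambda>(x,y). hat x y) ` (TT_n a \<times> TT_n (N - a)))"
    proof cases
      case one then show ?thesis by simp
    next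
      case (hat a b)
      have c: "card t = card a + card b" using hat card_hat_TT by simp
      have "1 \<le> card a" "1 \<le> card b" using hat card_TT_pos by auto
      then have "card a \<in> {1..<N}" using c ct by auto
      moreover have "(a, b) \<in> TT_n (card a) \<times> TT_n (N - card a)"
        using hat c ct by (auto simp: TT_n_def)
      ultimately show ?thesis using hat by blast
    qed
  qed
  moreover have "finite (\<Union>a\<in>{1..<N}. (\<lambda>(x,y). hat x y) ` (TT_n a \<times> TT_n (N - a)))"
    using less by (intro finite_UN_I finite_imageI finite_cartesian_product) auto
  ultimately show ?case by (meson finite.emptyI finite.insertI finite_UnI finite_subset)
qed

fun comb :: "nat \<Rightarrow> real set" where
  "comb 0 = {1}"
| "comb (Suc n) = hat (comb n) {1}"

lemma comb_TT: "comb n \<in> TT \<and> card (comb n) = Suc n"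
proof (induction n)
  case 0 then show ?case by (simp add: TT.one)
next
  case (Suc n)
  then have "comb n \<in> TT" "card (comb n) = Suc n" by auto
  moreover have "hat (comb n) {1} \<in> TT" using TT.hat[OF \<open>comb n \<in> TT\<close> TT.one] .
  moreover have "card (hat (comb n) {1}) = card (comb n) + card {1::real}"
    using card_hat_TT[OF \<open>comb n \<in> TT\<close> TT.one] .
  ultimately show ?case by simp
qed

lemma comb_TT_n: "1 \<le> n \<Longrightarrow> comb (n - 1) \<in> TT_n n"
  using comb_TT[of "n - 1"] by (simp add: TT_n_def)

subsection \<open>l-infinity\<close>

lemma linfty_iff: "f \<in> linfty \<longleftrightarrow> f \<in> extensional TT \<and> (\<exists>M. \<forall>t\<in>TT. \<bar>f t\<bar> \<le> M)"
  unfolding linfty_def bounded_iff by auto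

lemma linfty_bound: "f \<in> linfty \<Longrightarrow> \<exists>M. \<forall>t\<in>TT. \<bar>f t\<bar> \<le> M"
  by (simp add: linfty_iff)

lemma linfty_I: "(\<And>t. t \<in> TT \<Longrightarrow> \<bar>f t\<bar> \<le> M) \<Longrightarrow> restrict f TT \<in> linfty"
  by (auto simp: linfty_iff)

lemma linfty_one: "restrict (\<lambda>_. 1) TT \<in> linfty"
  by (rule linfty_I[of _ 1]) simp

lemma linfty_ind: "restrict (indicator E) TT \<in> linfty"
  by (rule linfty_I[of _ 1]) (simp add: indicator_def)

lemma linfty_comb:
  assumes "f \<in> linfty" "g \<in> linfty"
  shows "restrict (\<lambda>t. a * f t + b * g t) TT \<in> linfty"
proof -
  obtain M N where M: "\<forall>t\<in>TT. \<bar>f t\<bar> \<le> M" and N: "\<forall>t\<in>TT. \<bar>g t\<bar> \<le> N"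
    using assms linfty_bound by metis
  have "\<bar>a * f t + b * g t\<bar> \<le> \<bar>a\<bar> * M + \<bar>b\<bar> * N" if "t \<in> TT" for t
  proof -
    have "\<bar>a * f t + b * g t\<bar> \<le> \<bar>a\<bar> * \<bar>f t\<bar> + \<bar>b\<bar> * \<bar>g t\<bar>"
      by (metis abs_mult abs_triangle_ineq)
    also have "\<dots> \<le> \<bar>a\<bar> * M + \<bar>b\<bar> * N"
      using M N that by (intro add_mono mult_left_mono) auto
    finally show ?thesis .
  qed
  then show ?thesis by (rule linfty_I)
qed

lemma linfty_sum:
  assumes "finite J" "\<forall>j\<in>J. g j \<in> linfty"
  shows "restrict (\<lambda>t. \<Sum>j\<in>J. c j * g j t) TT \<in> linfty"
  using assms
proof (induction J rule: finite_induct)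
  case empty
  show ?case by (rule linfty_I[of _ 0]) simp
next
  case (insert k J)
  have "restrict (\<lambda>t. c k * g k t + 1 * restrict (\<lambda>t. \<Sum>j\<in>J. c j * g j t) TT t) TT \<in> linfty"
    using insert by (intro linfty_comb) auto
  moreover have "restrict (\<lambda>t. c k * g k t + 1 * restrict (\<lambda>t. \<Sum>j\<in>J. c j * g j t) TT t) TT
     = restrict (\<lambda>t. \<Sum>j\<in>insert k J. c j * g j t) TT"
    using insert by (intro restrict_ext) simp
  ultimately show ?case by metis
qed

lemma linfty_ext: "f \<in> linfty \<Longrightarrow> g \<in> linfty \<Longrightarrow> (\<And>t. t \<in> TT \<Longrightarrow> f t = g t) \<Longrightarrow> f = g"
  by (auto simp: linfty_iff intro: extensionalityI)

lemma PrT_D: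
  assumes "\<mu> \<in> PrT"
  shows "\<mu> \<in> extensional linfty"
    and "\<And>f g a b. f \<in> linfty \<Longrightarrow> g \<in> linfty \<Longrightarrow> \<mu> (restrict (\<lambda>t. a * f t + b * g t) TT) = a * \<mu> f + b * \<mu> g"
    and "\<And>f. f \<in> linfty \<Longrightarrow> (\<forall>t\<in>TT. 0 \<le> f t) \<Longrightarrow> 0 \<le> \<mu> f"
    and "\<mu> (restrict (\<lambda>_. 1) TT) = 1"
  using assms unfolding PrT_def by (auto simp: PiE_iff)

lemma PrT_lin:
  assumes "\<mu> \<in> PrT" "f \<in> linfty" "g \<in> linfty" "\<And>t. t \<in> TT \<Longrightarrow> h t = a * f t + b * g t"
  shows "\<mu> (restrict h TT) = a * \<mu> f + b * \<mu> g"
proof -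
  have "restrict h TT = restrict (\<lambda>t. a * f t + b * g t) TT"
    using assms(4) by (intro restrict_ext) simp
  then show ?thesis using PrT_D(2)[OF assms(1-3)] by simp
qed

lemma PrT_pos:
  assumes "\<mu> \<in> PrT" "f \<in> linfty" "\<And>t. t \<in> TT \<Longrightarrow> 0 \<le> f t"
  shows "0 \<le> \<mu> f"
  using PrT_D(3)[OF assms(1,2)] assms(3) by blast

lemma PrT_bound:
  assumes "\<mu> \<in> PrT" "f \<in> linfty" "\<And>t. t \<in> TT \<Longrightarrow> \<bar>f t\<bar> \<le> M"
  shows "\<bar>\<mu> f\<bar> \<le> M"
proof -
  let ?one = "restrict (\<lambda>_. 1) TT"
  have h1: "restrict (\<lambda>t. M * ?one t + (-1) * f t) TT \<in> linfty"
    by (rule linfty_comb[OF linfty_one assms(2)])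
  have "0 \<le> \<mu> (restrict (\<lambda>t. M * ?one t + (-1) * f t) TT)"
  proof (rule PrT_pos[OF assms(1) h1])
    fix t assume "t \<in> TT"
    then show "0 \<le> restrict (\<lambda>t. M * ?one t + (-1) * f t) TT t"
      using assms(3)[of t] by (simp add: abs_le_iff)
  qed
  also have "\<dots> = M * \<mu> ?one + (-1) * \<mu> f"
    by (rule PrT_D(2)[OF assms(1) linfty_one assms(2)])
  finally have 1: "\<mu> f \<le> M" using PrT_D(4)[OF assms(1)] by simp
  have h2: "restrict (\<lambda>t. M * ?one t + 1 * f t) TT \<in> linfty"
    by (rule linfty_comb[OF linfty_one assms(2)])
  have "0 \<le> \<mu> (restrict (\<lambda>t. M * ?one t + 1 * f t) TT)"
  proof (rule PrT_pos[OF assms(1) h2])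
    fix t assume "t \<in> TT"
    then show "0 \<le> restrict (\<lambda>t. M * ?one t + 1 * f t) TT t"
      using assms(3)[of t] by (simp add: abs_le_iff)
  qed
  also have "\<dots> = M * \<mu> ?one + 1 * \<mu> f"
    by (rule PrT_D(2)[OF assms(1) linfty_one assms(2)])
  finally have 2: "- M \<le> \<mu> f" using PrT_D(4)[OF assms(1)] by simp
  show ?thesis using 1 2 by linarith
qed

lemma PrT_sum:
  assumes "\<mu> \<in> PrT" "finite J" "\<forall>j\<in>J. g j \<in> linfty"
    and "\<And>t. t \<in> TT \<Longrightarrow> h t = (\<Sum>j\<in>J. c j * g j t)"
  shows "\<mu> (restrict h TT) = (\<Sum>j\<in>J. c j * \<mu> (g j))"
  using assms(2,3,4)
proof (induction J arbitrary: h rule: finite_induct)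
  case empty
  have "\<mu> (restrict h TT) = 0 * \<mu> (restrict (\<lambda>_. 1) TT) + 0 * \<mu> (restrict (\<lambda>_. 1) TT)"
    using empty by (intro PrT_lin[OF assms(1) linfty_one linfty_one]) simp
  then show ?case by (simp only: mult_zero_left add_0 sum.empty)
next
  case (insert k J)
  let ?g = "restrict (\<lambda>t. \<Sum>j\<in>J. c j * g j t) TT"
  have "\<mu> (restrict h TT) = c k * \<mu> (g k) + 1 * \<mu> ?g"
    using insert by (intro PrT_lin[OF assms(1)] linfty_sum) auto
  also have "\<mu> ?g = (\<Sum>j\<in>J. c j * \<mu> (g j))"
    using insert by (intro insert.IH) auto
  finally show ?case using insert by simp
qed

definition rep :: "nat \<Rightarrow> (real set \<Rightarrow> real) \<Rightarrow> ((real set \<Rightarrow> real) \<Rightarrow> real)" where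
  "rep n p = (\<lambda>f\<in>linfty. \<Sum>t\<in>TT_n n. p t * f t)"

definition wt :: "nat \<Rightarrow> (real set \<Rightarrow> real) \<Rightarrow> bool" where
  "wt n p \<longleftrightarrow> (\<forall>t\<in>TT_n n. 0 \<le> p t) \<and> (\<Sum>t\<in>TT_n n. p t) = 1"

lemma AA_eq: "AA n = {rep n p | p. wt n p}"
  by (simp add: AA_def rep_def wt_def)

lemma rep_PrT:
  assumes "wt n p"
  shows "rep n p \<in> PrT"
proof -
  have "rep n p \<in> linfty \<rightarrow>\<^sub>E UNIV" by (simp add: rep_def)
  moreover have "rep n p (restrict (\<lambda>t. a * f t + b * g t) TT) = a * rep n p f + b * rep n p g"
    if "f \<in> linfty" "g \<in> linfty" for f g a b
  proof -
    have "rep n p (restrict (\<lambda>t. a * f t + b * g t) TT) = (\<Sum>t\<in>TT_n n. p t * (a * f t + b * g t))"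
      using linfty_comb[OF that] by (auto simp: rep_def dest: TT_n_TT intro!: sum.cong)
    also have "\<dots> = a * (\<Sum>t\<in>TT_n n. p t * f t) + b * (\<Sum>t\<in>TT_n n. p t * g t)"
      by (simp add: sum.distrib sum_distrib_left algebra_simps)
    finally show ?thesis using that by (simp add: rep_def)
  qed
  moreover have "0 \<le> rep n p f" if "f \<in> linfty" "\<forall>t\<in>TT. 0 \<le> f t" for f
    using that assms TT_n_sub by (auto simp: rep_def wt_def subset_iff intro!: sum_nonneg mult_nonneg_nonneg)
  moreover have "rep n p (restrict (\<lambda>_. 1) TT) = 1"
  proof -
    have "rep n p (restrict (\<lambda>_. 1) TT) = (\<Sum>t\<in>TT_n n. p t)"
      using linfty_one by (auto simp: rep_def dest: TT_n_TT intro!: sum.cong)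
    then show ?thesis using assms by (simp add: wt_def)
  qed
  ultimately show ?thesis unfolding PrT_def by blast
qed

lemma AA_PrT: "\<alpha> \<in> AA n \<Longrightarrow> \<alpha> \<in> PrT"
  using rep_PrT by (auto simp: AA_eq)

subsection \<open>The ultrafilter as a filter\<close>

definition FU :: "nat set set \<Rightarrow> nat filter" where
  "FU U = Abs_filter (\<lambda>P. {n\<in>Npos. P n} \<in> U)"

lemma uf_D:
  assumes "ultrafilter_N U"
  shows "U \<subseteq> Pow Npos" "Npos \<in> U" "{} \<notin> U"
    "\<And>A B. A \<in> U \<Longrightarrow> B \<in> U \<Longrightarrow> A \<inter> B \<in> U"
    "\<And>A B. A \<in> U \<Longrightarrow> A \<subseteq> B \<Longrightarrow> B \<subseteq> Npos \<Longrightarrow> B \<in> U"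
    "\<And>A. A \<subseteq> Npos \<Longrightarrow> A \<in> U \<or> Npos - A \<in> U"
  using assms unfolding ultrafilter_N_def by blast+

lemma eventually_FU:
  assumes "ultrafilter_N U"
  shows "eventually P (FU U) \<longleftrightarrow> {n\<in>Npos. P n} \<in> U"
proof -
  have "is_filter (\<lambda>P. {n\<in>Npos. P n} \<in> U)"
  proof
    show "{n\<in>Npos. True} \<in> U" using uf_D(2)[OF assms] by simp
  next
    fix P Q assume "{n\<in>Npos. P n} \<in> U" "{n\<in>Npos. Q n} \<in> U"
    then have "{n\<in>Npos. P n} \<inter> {n\<in>Npos. Q n} \<in> U" by (rule uf_D(4)[OF assms])
    moreover have "{n\<in>Npos. P n} \<inter> {n\<in>Npos. Q n} = {n\<in>Npos. P n \<and> Q n}" by blast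
    ultimately show "{n\<in>Npos. P n \<and> Q n} \<in> U" by simp
  next
    fix P Q assume a1: "\<forall>x. P x \<longrightarrow> Q x" and a2: "{n\<in>Npos. P n} \<in> U"
    have "{n\<in>Npos. P n} \<subseteq> {n\<in>Npos. Q n}" using a1 by blast
    then show "{n\<in>Npos. Q n} \<in> U" using uf_D(5)[OF assms a2] by blast
  qed
  then show ?thesis
    unfolding FU_def by (rule eventually_Abs_filter)
qed

lemma FU_nontriv: "ultrafilter_N U \<Longrightarrow> FU U \<noteq> bot"
  by (simp add: trivial_limit_def eventually_FU uf_D(3))

lemma FU_ultra:
  assumes "ultrafilter_N U"
  shows "eventually P (FU U) \<or> eventually (\<lambda>n. \<not> P n) (FU U)"
proof -
  have "{n\<in>Npos. \<not> P n} = Npos - {n\<in>Npos. P n}" by blast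
  then show ?thesis using uf_D(6)[OF assms, of "{n\<in>Npos. P n}"]
    by (simp add: eventually_FU[OF assms])
qed

lemma FU_lim:
  fixes x :: "nat \<Rightarrow> real"
  assumes U: "ultrafilter_N U" and M: "\<forall>n. \<bar>x n\<bar> \<le> M"
  shows "\<exists>L. (x \<longlongrightarrow> L) (FU U)"
proof -
  let ?F = "filtermap x (FU U)"
  have "compact {-M..M}" by simp
  moreover have "?F \<noteq> bot" using FU_nontriv[OF U] by (simp add: filtermap_bot_iff)
  moreover have "eventually (\<lambda>y. y \<in> {-M..M}) ?F"
  proof -
    have "\<forall>n. x n \<in> {-M..M}" using M by (metis abs_le_iff atLeastAtMost_iff minus_le_iff)
    then have "eventually (\<lambda>n. x n \<in> {-M..M}) (FU U)" by (rule always_eventually)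
    then show ?thesis by (simp add: eventually_filtermap)
  qed
  ultimately have "\<exists>L\<in>{-M..M}. inf (nhds L) ?F \<noteq> bot"
    by (rule compact_filter[THEN iffD1, rule_format])
  then obtain L where L: "inf (nhds L) ?F \<noteq> bot" by blast
  have "(x \<longlongrightarrow> L) (FU U)"
  proof (rule topological_tendstoI)
    fix S assume S: "open S" "L \<in> S"
    show "eventually (\<lambda>n. x n \<in> S) (FU U)"
    proof (rule ccontr)
      assume "\<not> ?thesis"
      then have ev: "eventually (\<lambda>n. x n \<notin> S) (FU U)" using FU_ultra[OF U] by blast
      have e1: "eventually (\<lambda>y. y \<in> S) (nhds L)" using S by (rule eventually_nhds_in_open)
      have e2: "eventually (\<lambda>y. y \<notin> S) ?F" using ev by (simp add: eventually_filtermap)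
      have "eventually (\<lambda>y. False) (inf (nhds L) ?F)"
        unfolding eventually_inf using e1 e2 by blast
      then show False using L by (simp add: trivial_limit_def)
    qed
  qed
  then show ?thesis by blast
qed

definition ulim :: "nat set set \<Rightarrow> (nat \<Rightarrow> real) \<Rightarrow> real" where
  "ulim U x = Lim (FU U) x"

lemma ulim_tendsto:
  fixes x :: "nat \<Rightarrow> real"
  assumes U: "ultrafilter_N U" and M: "\<forall>n. \<bar>x n\<bar> \<le> M"
  shows "(x \<longlongrightarrow> ulim U x) (FU U)"
proof -
  obtain L where L: "(x \<longlongrightarrow> L) (FU U)" using FU_lim[of U x M] U M by blast
  then have "ulim U x = L" unfolding ulim_def using FU_nontriv[OF U] by (intro tendsto_Lim) auto
  then show ?thesis using L by simp
qed

lemma ulim_eq: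
  assumes U: "ultrafilter_N U" and "(x \<longlongrightarrow> L) (FU U)"
  shows "ulim U x = L"
  unfolding ulim_def using FU_nontriv[OF U] assms(2) by (intro tendsto_Lim) auto

lemma ulim_lin:
  assumes U: "ultrafilter_N U" and "\<forall>n. \<bar>x n\<bar> \<le> M" "\<forall>n. \<bar>y n\<bar> \<le> N"
  shows "ulim U (\<lambda>n. a * x n + b * y n) = a * ulim U x + b * ulim U y"
proof -
  have "(x \<longlongrightarrow> ulim U x) (FU U)" "(y \<longlongrightarrow> ulim U y) (FU U)"
    using ulim_tendsto U assms(2,3) by blast+
  then show ?thesis by (intro ulim_eq[OF U] tendsto_intros)
qed

lemma ulim_nonneg:
  assumes U: "ultrafilter_N U" and "\<forall>n. \<bar>x n\<bar> \<le> M" "\<And>n. 0 \<le> x n"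
  shows "0 \<le> ulim U x"
proof -
  have t: "(x \<longlongrightarrow> ulim U x) (FU U)" using ulim_tendsto U assms(2) by blast
  have e: "eventually (\<lambda>n. 0 \<le> x n) (FU U)" by (rule always_eventually) (use assms(3) in blast)
  show ?thesis by (rule tendsto_lowerbound[OF t e FU_nontriv[OF U]])
qed

lemma ulim_const: "ultrafilter_N U \<Longrightarrow> ulim U (\<lambda>n. c) = c"
  by (rule ulim_eq) auto

lemma ulim_01:
  assumes U: "ultrafilter_N U" and "\<And>n. x n \<in> {0,1}"
  shows "ulim U x \<in> {0,1}"
proof -
  have M: "\<forall>n. \<bar>x n\<bar> \<le> 1" using assms(2) by (metis abs_0 abs_one empty_iff insert_iff order_refl zero_le_one)
  have ev: "eventually (\<lambda>n. x n \<in> {0,1}) (FU U)"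
    by (rule always_eventually) (use assms(2) in blast)
  show ?thesis
    by (rule Lim_in_closed_set[OF _ ev FU_nontriv[OF U] ulim_tendsto[of U x 1, OF U M]]) simp
qed

lemma idem_ev:
  assumes U: "ultrafilter_N U" and I: "idempotent_N U"
    and ev: "eventually (\<lambda>n. eventually (\<lambda>m. P (n + m)) (FU U)) (FU U)"
  shows "eventually P (FU U)"
proof -
  let ?W = "{N\<in>Npos. P N}"
  have "{n\<in>Npos. {m\<in>Npos. P (n + m)} \<in> U} \<in> U"
    using ev by (simp add: eventually_FU[OF U])
  moreover have "{m\<in>Npos. m + k \<in> ?W} = {m\<in>Npos. P (m + k)}" if "k \<in> Npos" for k
    using that by (auto simp: Npos_def)
  moreover have "{k\<in>Npos. m + k \<in> ?W} = {k\<in>Npos. P (m + k)}" for m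
    by (auto simp: Npos_def)
  ultimately have "?W \<in> uplus U U" unfolding uplus_def by simp
  then show ?thesis using I by (simp add: idempotent_N_def eventually_FU[OF U])
qed

lemma ev_Npos: "ultrafilter_N U \<Longrightarrow> eventually (\<lambda>n. 1 \<le> n) (FU U)"
proof -
  assume U: "ultrafilter_N U"
  have "{n\<in>Npos. 1 \<le> n} = Npos" by (auto simp: Npos_def)
  then show ?thesis using uf_D(2)[OF U] by (simp add: eventually_FU[OF U])
qed

lemma AU_D:
  assumes U: "ultrafilter_N U" and mu: "\<mu> \<in> AU U" and F: "finite Fs" "Fs \<subseteq> linfty" and e: "0 < \<epsilon>"
  shows "eventually (\<lambda>m. \<exists>\<alpha>\<in>AA m. \<forall>f\<in>Fs. \<bar>\<alpha> f - \<mu> f\<bar> < \<epsilon>) (FU U)"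
proof -
  define V where "V = (\<lambda>f. if f \<in> Fs then ball (\<mu> f) \<epsilon> else (UNIV::real set))"
  let ?W = "PiE linfty V \<inter> PrT"
  have muP: "\<mu> \<in> PrT" using mu by (simp add: AU_def)
  have op1: "openin (product_topology (\<lambda>_. euclideanreal) linfty) (PiE linfty V)"
  proof (rule product_topology_basis)
    show "openin euclideanreal (V f)" for f by (simp add: V_def)
    show "finite {f. V f \<noteq> topspace euclideanreal}"
      by (rule finite_subset[OF _ F(1)]) (auto simp: V_def)
  qed
  have "openin weak_star ?W" unfolding weak_star_def openin_subtopology using op1 by blast
  moreover have "\<mu> \<in> ?W"
  proof -
    have "\<mu> \<in> extensional linfty" using PrT_D(1)[OF muP] .
    moreover have "\<mu> f \<in> V f" for f by (simp add: V_def e)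
    ultimately show ?thesis using muP by (simp add: PiE_iff)
  qed
  ultimately have "{m\<in>Npos. ?W \<inter> AA m \<noteq> {}} \<in> U"
    using mu unfolding AU_def by blast
  then have "eventually (\<lambda>m. ?W \<inter> AA m \<noteq> {}) (FU U)" by (simp add: eventually_FU[OF U])
  then show ?thesis
  proof (rule eventually_mono)
    fix m assume "?W \<inter> AA m \<noteq> {}"
    then obtain \<alpha> where \<alpha>: "\<alpha> \<in> ?W" "\<alpha> \<in> AA m" by blast
    have "\<bar>\<alpha> f - \<mu> f\<bar> < \<epsilon>" if "f \<in> Fs" for f
    proof -
      have "f \<in> linfty" using that F(2) by blast
      then have "\<alpha> f \<in> V f" using \<alpha>(1) by (simp add: PiE_iff)
      then show ?thesis using that by (simp add: V_def dist_real_def abs_minus_commute)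
    qed
    then show "\<exists>\<alpha>\<in>AA m. \<forall>f\<in>Fs. \<bar>\<alpha> f - \<mu> f\<bar> < \<epsilon>" using \<alpha>(2) by blast
  qed
qed

lemma AU_I:
  assumes U: "ultrafilter_N U" and mu: "\<mu> \<in> PrT"
    and H: "\<And>Fs \<epsilon>. finite Fs \<Longrightarrow> Fs \<subseteq> linfty \<Longrightarrow> 0 < \<epsilon> \<Longrightarrow>
              eventually (\<lambda>m. \<exists>\<alpha>\<in>AA m. \<forall>f\<in>Fs. \<bar>\<alpha> f - \<mu> f\<bar> < \<epsilon>) (FU U)"
  shows "\<mu> \<in> AU U"
proof -
  have "{m\<in>Npos. W \<inter> AA m \<noteq> {}} \<in> U" if W: "openin weak_star W" "\<mu> \<in> W" for W
  proof -
    obtain T where T: "openin (product_topology (\<lambda>_. euclideanreal) linfty) T" "W = T \<inter> PrT"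
      using W(1) unfolding weak_star_def openin_subtopology by blast
    have "\<mu> \<in> T" using W(2) T(2) by blast
    from product_topology_open_contains_basis[OF T(1) this] obtain V where
      V: "\<mu> \<in> PiE linfty V" "\<And>f. openin euclideanreal (V f)"
         "finite {f. V f \<noteq> topspace euclideanreal}" "PiE linfty V \<subseteq> T"
      by blast
    define Fs where "Fs = {f. V f \<noteq> UNIV} \<inter> linfty"
    have fin: "finite Fs" using V(3) by (simp add: Fs_def)
    have Fs_sub: "Fs \<subseteq> linfty" by (simp add: Fs_def)
    have "\<exists>e>0. ball (\<mu> f) e \<subseteq> V f" if "f \<in> Fs" for f
    proof -
      have "\<mu> f \<in> V f" using V(1) that by (auto simp: Fs_def PiE_iff)
      moreover have "open (V f)" using V(2)[of f] by simp
      ultimately show ?thesis by (simp add: open_contains_ball)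
    qed
    then obtain e where e: "\<And>f. f \<in> Fs \<Longrightarrow> 0 < e f \<and> ball (\<mu> f) (e f) \<subseteq> V f" by metis
    define \<epsilon> where "\<epsilon> = Min (insert 1 (e ` Fs))"
    have \<epsilon>: "0 < \<epsilon>" using fin e by (simp add: \<epsilon>_def)
    have \<epsilon>le: "\<epsilon> \<le> e f" if "f \<in> Fs" for f using fin that by (simp add: \<epsilon>_def)
    have "eventually (\<lambda>m. W \<inter> AA m \<noteq> {}) (FU U)"
      using H[OF fin Fs_sub \<epsilon>]
    proof (rule eventually_mono)
      fix m assume "\<exists>\<alpha>\<in>AA m. \<forall>f\<in>Fs. \<bar>\<alpha> f - \<mu> f\<bar> < \<epsilon>"
      then obtain \<alpha> where \<alpha>: "\<alpha> \<in> AA m" "\<forall>f\<in>Fs. \<bar>\<alpha> f - \<mu> f\<bar> < \<epsilon>" by blast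
      have aP: "\<alpha> \<in> PrT" using AA_PrT[OF \<alpha>(1)] .
      have "\<alpha> \<in> PiE linfty V"
      proof -
        have "\<alpha> f \<in> V f" if "f \<in> linfty" for f
        proof (cases "V f = UNIV")
          case False
          then have fF: "f \<in> Fs" using that by (simp add: Fs_def)
          then have "\<bar>\<alpha> f - \<mu> f\<bar> < e f" using \<alpha>(2) \<epsilon>le[OF fF] by fastforce
          then have "\<alpha> f \<in> ball (\<mu> f) (e f)" by (simp add: dist_real_def abs_minus_commute)
          then show ?thesis using e[OF fF] by blast
        qed simp
        then show ?thesis using PrT_D(1)[OF aP] by (simp add: PiE_iff)
      qed
      then have "\<alpha> \<in> W" using V(4) T(2) aP by blast
      then show "W \<inter> AA m \<noteq> {}" using \<alpha>(1) by blast
    qed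
    then show ?thesis by (simp add: eventually_FU[OF U])
  qed
  then show ?thesis using mu by (simp add: AU_def)
qed

subsection \<open>A 0-1 valued element\<close>

definition mu0 :: "nat set set \<Rightarrow> ((real set \<Rightarrow> real) \<Rightarrow> real)" where
  "mu0 U = (\<lambda>f\<in>linfty. ulim U (\<lambda>n. f (comb (n - 1))))"

lemma comb_in_TT: "comb k \<in> TT"
  using comb_TT by blast

lemma seq_bound: "f \<in> linfty \<Longrightarrow> \<exists>M. \<forall>n. \<bar>f (comb (n - 1))\<bar> \<le> M"
  using linfty_bound comb_in_TT by metis

lemma mu0_PrT:
  assumes U: "ultrafilter_N U"
  shows "mu0 U \<in> PrT"
proof -
  have "mu0 U \<in> linfty \<rightarrow>\<^sub>E UNIV" by (simp add: mu0_def)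
  moreover have "mu0 U (restrict (\<lambda>t. a * f t + b * g t) TT) = a * mu0 U f + b * mu0 U g"
    if fg: "f \<in> linfty" "g \<in> linfty" for f g a b
  proof -
    obtain M where M: "\<forall>n. \<bar>f (comb (n - 1))\<bar> \<le> M" using seq_bound[OF fg(1)] by blast
    obtain N where N: "\<forall>n. \<bar>g (comb (n - 1))\<bar> \<le> N" using seq_bound[OF fg(2)] by blast
    have "mu0 U (restrict (\<lambda>t. a * f t + b * g t) TT) = ulim U (\<lambda>n. a * f (comb (n - 1)) + b * g (comb (n - 1)))"
      using linfty_comb[OF fg] by (simp add: mu0_def comb_in_TT)
    also have "\<dots> = a * ulim U (\<lambda>n. f (comb (n - 1))) + b * ulim U (\<lambda>n. g (comb (n - 1)))"
      by (rule ulim_lin[OF U M N])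
    finally show ?thesis using fg by (simp add: mu0_def)
  qed
  moreover have "0 \<le> mu0 U f" if fp: "f \<in> linfty" "\<forall>t\<in>TT. 0 \<le> f t" for f
  proof -
    obtain M where M: "\<forall>n. \<bar>f (comb (n - 1))\<bar> \<le> M" using seq_bound[OF fp(1)] by blast
    have "0 \<le> ulim U (\<lambda>n. f (comb (n - 1)))"
      by (rule ulim_nonneg[OF U M]) (use fp comb_in_TT in blast)
    then show ?thesis using fp by (simp add: mu0_def)
  qed
  moreover have "mu0 U (restrict (\<lambda>_. 1) TT) = 1"
    using linfty_one ulim_const[OF U] by (simp add: mu0_def comb_in_TT)
  ultimately show ?thesis unfolding PrT_def by blast
qed

definition zo :: "((real set \<Rightarrow> real) \<Rightarrow> real) \<Rightarrow> bool" where
  "zo \<mu> \<longleftrightarrow> (\<forall>E. meas \<mu> E \<in> {0,1})"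

lemma mu0_zo:
  assumes U: "ultrafilter_N U"
  shows "zo (mu0 U)"
  unfolding zo_def
proof
  fix E
  have "meas (mu0 U) E = ulim U (\<lambda>n. indicator E (comb (n - 1)))"
    using linfty_ind by (simp add: meas_def mu0_def comb_in_TT)
  also have "\<dots> \<in> {0,1}" by (rule ulim_01[OF U]) (simp add: indicator_def)
  finally show "meas (mu0 U) E \<in> {0,1}" .
qed

lemma rep_eval: "f \<in> linfty \<Longrightarrow> rep n p f = (\<Sum>t\<in>TT_n n. p t * f t)"
  by (simp add: rep_def)

lemma mu0_AU:
  assumes U: "ultrafilter_N U"
  shows "mu0 U \<in> AU U"
proof (rule AU_I[OF U mu0_PrT[OF U]])
  fix Fs \<epsilon> assume F: "finite Fs" "Fs \<subseteq> linfty" and e: "(0::real) < \<epsilon>"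
  have "\<forall>f\<in>Fs. eventually (\<lambda>n. \<bar>f (comb (n - 1)) - mu0 U f\<bar> < \<epsilon>) (FU U)"
  proof
    fix f assume "f \<in> Fs"
    then have fl: "f \<in> linfty" using F(2) by blast
    obtain M where M: "\<forall>n. \<bar>f (comb (n - 1))\<bar> \<le> M" using seq_bound[OF fl] by blast
    have "((\<lambda>n. f (comb (n - 1))) \<longlongrightarrow> mu0 U f) (FU U)"
      using ulim_tendsto[OF U M] fl by (simp add: mu0_def)
    then show "eventually (\<lambda>n. \<bar>f (comb (n - 1)) - mu0 U f\<bar> < \<epsilon>) (FU U)"
      using e by (simp add: tendsto_iff dist_real_def)
  qed
  then have "eventually (\<lambda>n. \<forall>f\<in>Fs. \<bar>f (comb (n - 1)) - mu0 U f\<bar> < \<epsilon>) (FU U)"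
    by (rule eventually_ball_finite[OF F(1)])
  then have "eventually (\<lambda>n. 1 \<le> n \<and> (\<forall>f\<in>Fs. \<bar>f (comb (n - 1)) - mu0 U f\<bar> < \<epsilon>)) (FU U)"
    using ev_Npos[OF U] by (simp add: eventually_conj_iff)
  then show "eventually (\<lambda>m. \<exists>\<alpha>\<in>AA m. \<forall>f\<in>Fs. \<bar>\<alpha> f - mu0 U f\<bar> < \<epsilon>) (FU U)"
  proof (rule eventually_mono)
    fix n assume n: "1 \<le> n \<and> (\<forall>f\<in>Fs. \<bar>f (comb (n - 1)) - mu0 U f\<bar> < \<epsilon>)"
    let ?c = "comb (n - 1)"
    let ?p = "\<lambda>t. if t = ?c then 1 else (0::real)"
    have cT: "?c \<in> TT_n n" using comb_TT_n n by blast
    have w: "wt n ?p" using cT by (simp add: wt_def finite_TT_n)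
    have ev: "rep n ?p f = f ?c" if fl: "f \<in> linfty" for f
    proof -
      have "rep n ?p f = (\<Sum>t\<in>TT_n n. if t = ?c then f t else 0)"
        using fl by (simp add: rep_eval) (intro sum.cong, auto)
      also have "\<dots> = f ?c" using cT by (simp add: finite_TT_n)
      finally show ?thesis .
    qed
    have "rep n ?p \<in> AA n" using w by (auto simp: AA_eq)
    moreover have "\<forall>f\<in>Fs. \<bar>rep n ?p f - mu0 U f\<bar> < \<epsilon>" using n ev F(2) by auto
    ultimately show "\<exists>\<alpha>\<in>AA n. \<forall>f\<in>Fs. \<bar>\<alpha> f - mu0 U f\<bar> < \<epsilon>" by blast
  qed
qed

subsection \<open>The operation on functionals\<close>

definition Gv :: "((real set \<Rightarrow> real) \<Rightarrow> real) \<Rightarrow> (real set \<Rightarrow> real) \<Rightarrow> (real set \<Rightarrow> real)" where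
  "Gv \<nu> f = restrict (\<lambda>x. \<nu> (restrict (\<lambda>y. f (hat x y)) TT)) TT"

lemma hat_TT: "x \<in> TT \<Longrightarrow> y \<in> TT \<Longrightarrow> hat x y \<in> TT"
  by (rule TT.hat)

lemma inner_linfty:
  assumes "f \<in> linfty" "x \<in> TT"
  shows "restrict (\<lambda>y. f (hat x y)) TT \<in> linfty"
proof -
  obtain M where M: "\<forall>t\<in>TT. \<bar>f t\<bar> \<le> M" using linfty_bound[OF assms(1)] by blast
  show ?thesis by (rule linfty_I[of _ M]) (use M assms(2) hat_TT in blast)
qed

lemma Gv_linfty:
  assumes "\<nu> \<in> PrT" "f \<in> linfty"
  shows "Gv \<nu> f \<in> linfty"
proof -
  obtain M where M: "\<forall>t\<in>TT. \<bar>f t\<bar> \<le> M" using linfty_bound[OF assms(2)] by blast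
  have "\<bar>\<nu> (restrict (\<lambda>y. f (hat x y)) TT)\<bar> \<le> M" if "x \<in> TT" for x
  proof (rule PrT_bound[OF assms(1) inner_linfty[OF assms(2) that]])
    fix t assume "t \<in> TT"
    then show "\<bar>restrict (\<lambda>y. f (hat x y)) TT t\<bar> \<le> M" using M that hat_TT by simp
  qed
  then show ?thesis unfolding Gv_def by (rule linfty_I)
qed

lemma hatm_eq: "f \<in> linfty \<Longrightarrow> hatm \<mu> \<nu> f = \<mu> (Gv \<nu> f)"
  by (simp add: hatm_def Gv_def)

lemma hatm_PrT:
  assumes mu: "\<mu> \<in> PrT" and nu: "\<nu> \<in> PrT"
  shows "hatm \<mu> \<nu> \<in> PrT"
proof -
  have "hatm \<mu> \<nu> \<in> linfty \<rightarrow>\<^sub>E UNIV" by (simp add: hatm_def)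
  moreover have "hatm \<mu> \<nu> (restrict (\<lambda>t. a * f t + b * g t) TT) = a * hatm \<mu> \<nu> f + b * hatm \<mu> \<nu> g"
    if fg: "f \<in> linfty" "g \<in> linfty" for f g a b
  proof -
    let ?h = "restrict (\<lambda>t. a * f t + b * g t) TT"
    have hl: "?h \<in> linfty" by (rule linfty_comb[OF fg])
    have inner: "\<nu> (restrict (\<lambda>y. ?h (hat x y)) TT) = a * Gv \<nu> f x + b * Gv \<nu> g x" if x: "x \<in> TT" for x
    proof -
      have "\<nu> (restrict (\<lambda>y. ?h (hat x y)) TT)
          = a * \<nu> (restrict (\<lambda>y. f (hat x y)) TT) + b * \<nu> (restrict (\<lambda>y. g (hat x y)) TT)"
        by (rule PrT_lin[OF nu inner_linfty[OF fg(1) x] inner_linfty[OF fg(2) x]])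
          (use x hat_TT in simp)
      then show ?thesis using x by (simp add: Gv_def)
    qed
    have "hatm \<mu> \<nu> ?h = \<mu> (Gv \<nu> ?h)" by (rule hatm_eq[OF hl])
    also have "\<dots> = a * \<mu> (Gv \<nu> f) + b * \<mu> (Gv \<nu> g)"
      unfolding Gv_def[of \<nu> ?h]
      by (rule PrT_lin[OF mu Gv_linfty[OF nu fg(1)] Gv_linfty[OF nu fg(2)]]) (rule inner)
    finally show ?thesis using fg by (simp add: hatm_eq)
  qed
  moreover have "0 \<le> hatm \<mu> \<nu> f" if fp: "f \<in> linfty" "\<forall>t\<in>TT. 0 \<le> f t" for f
  proof -
    have "0 \<le> \<mu> (Gv \<nu> f)"
    proof (rule PrT_pos[OF mu Gv_linfty[OF nu fp(1)]])
      fix x assume x: "x \<in> TT"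
      have "0 \<le> \<nu> (restrict (\<lambda>y. f (hat x y)) TT)"
        by (rule PrT_pos[OF nu inner_linfty[OF fp(1) x]]) (use fp x hat_TT in simp)
      then show "0 \<le> Gv \<nu> f x" using x by (simp add: Gv_def)
    qed
    then show ?thesis using fp by (simp add: hatm_eq)
  qed
  moreover have "hatm \<mu> \<nu> (restrict (\<lambda>_. 1) TT) = 1"
  proof -
    have "Gv \<nu> (restrict (\<lambda>_. 1) TT) = restrict (\<lambda>_. 1) TT"
      unfolding Gv_def
    proof (rule restrict_ext)
      fix x assume x: "x \<in> TT"
      have "restrict (\<lambda>y. restrict (\<lambda>_. 1::real) TT (hat x y)) TT = restrict (\<lambda>_. 1) TT"
        by (rule restrict_ext) (use x hat_TT in simp)
      then show "\<nu> (restrict (\<lambda>y. restrict (\<lambda>_. 1) TT (hat x y)) TT) = 1"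
        using PrT_D(4)[OF nu] by simp
    qed
    then show ?thesis using linfty_one PrT_D(4)[OF mu] by (simp add: hatm_eq)
  qed
  ultimately show ?thesis unfolding PrT_def by blast
qed

lemma hatm_rep_eval:
  assumes "f \<in> linfty" "\<beta> \<in> PrT"
  shows "hatm (rep n p) \<beta> f = (\<Sum>x\<in>TT_n n. p x * \<beta> (restrict (\<lambda>y. f (hat x y)) TT))"
  using assms Gv_linfty[OF assms(2,1)]
  by (auto simp: hatm_eq rep_eval Gv_def dest: TT_n_TT intro!: sum.cong)

lemma hatm_rep:
  assumes p: "wt n p" and q: "wt m q"
  shows "\<exists>r. hatm (rep n p) (rep m q) = rep (n + m) r \<and> wt (n + m) r"
proof -
  define S where "S = TT_n n \<times> TT_n m"
  define g where "g = (\<lambda>z. hat (fst z) (snd z))"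
  define r where "r = (\<lambda>t. \<Sum>z\<in>{z. z \<in> S \<and> g z = t}. p (fst z) * q (snd z))"
  have finS: "finite S" by (simp add: S_def finite_TT_n)
  have gS: "g ` S \<subseteq> TT_n (n + m)" by (auto simp: S_def g_def hat_TT_n)
  have qP: "rep m q \<in> PrT" by (rule rep_PrT[OF q])
  have eq: "hatm (rep n p) (rep m q) f = rep (n + m) r f" if fl: "f \<in> linfty" for f
  proof -
    have "hatm (rep n p) (rep m q) f = (\<Sum>x\<in>TT_n n. p x * (\<Sum>y\<in>TT_n m. q y * f (hat x y)))"
      using fl inner_linfty[OF fl]
      by (auto simp: hatm_rep_eval[OF fl qP] rep_eval hat_TT dest!: TT_n_TT intro!: sum.cong)
    also have "\<dots> = (\<Sum>z\<in>S. p (fst z) * q (snd z) * f (g z))"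
      by (simp add: S_def g_def sum.cartesian_product sum_distrib_left mult.assoc case_prod_beta)
    also have "\<dots> = (\<Sum>t\<in>TT_n (n + m). \<Sum>z\<in>{z. z \<in> S \<and> g z = t}. p (fst z) * q (snd z) * f (g z))"
      by (rule sum.group[OF finS finite_TT_n gS, symmetric])
    also have "\<dots> = (\<Sum>t\<in>TT_n (n + m). r t * f t)"
      by (auto simp: r_def sum_distrib_right intro!: sum.cong)
    finally show ?thesis using fl by (simp add: rep_eval)
  qed
  have "hatm (rep n p) (rep m q) = rep (n + m) r"
  proof
    fix f show "hatm (rep n p) (rep m q) f = rep (n + m) r f"
      by (cases "f \<in> linfty") (simp_all add: eq, simp add: hatm_def rep_def)
  qed
  moreover have "wt (n + m) r"
  proof -
    have "\<forall>t\<in>TT_n (n + m). 0 \<le> r t"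
      using p q by (auto simp: r_def wt_def S_def intro!: sum_nonneg)
    moreover have "(\<Sum>t\<in>TT_n (n + m). r t) = (\<Sum>z\<in>S. p (fst z) * q (snd z))"
      unfolding r_def by (rule sum.group[OF finS finite_TT_n gS])
    moreover have "\<dots> = (\<Sum>x\<in>TT_n n. p x) * (\<Sum>y\<in>TT_n m. q y)"
      by (simp add: S_def sum.cartesian_product sum_product case_prod_beta)
    ultimately show ?thesis using p q by (simp add: wt_def)
  qed
  ultimately show ?thesis by blast
qed

lemma hatm_AU:
  assumes U: "ultrafilter_N U" and I: "idempotent_N U" and mu: "\<mu> \<in> AU U" and nu: "\<nu> \<in> AU U"
  shows "hatm \<mu> \<nu> \<in> AU U"
proof -
  have muP: "\<mu> \<in> PrT" and nuP: "\<nu> \<in> PrT" using mu nu by (auto simp: AU_def)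
  show ?thesis
  proof (rule AU_I[OF U hatm_PrT[OF muP nuP]])
    fix Fs \<epsilon> assume F: "finite Fs" "Fs \<subseteq> linfty" and e: "(0::real) < \<epsilon>"
    let ?G = "Gv \<nu> ` Fs"
    have Gsub: "?G \<subseteq> linfty" using F(2) Gv_linfty[OF nuP] by blast
    have ev1: "eventually (\<lambda>n. \<exists>\<alpha>\<in>AA n. \<forall>g\<in>?G. \<bar>\<alpha> g - \<mu> g\<bar> < \<epsilon>/2) (FU U)"
      by (rule AU_D[OF U mu finite_imageI[OF F(1)] Gsub]) (use e in simp)
    let ?P = "\<lambda>N. \<exists>\<alpha>\<in>AA N. \<forall>f\<in>Fs. \<bar>\<alpha> f - hatm \<mu> \<nu> f\<bar> < \<epsilon>"
    have step: "eventually (\<lambda>m. ?P (n + m)) (FU U)"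
      if ex: "\<exists>\<alpha>\<in>AA n. \<forall>g\<in>?G. \<bar>\<alpha> g - \<mu> g\<bar> < \<epsilon>/2" for n
    proof -
      obtain \<alpha> where \<alpha>: "\<alpha> \<in> AA n" "\<forall>g\<in>?G. \<bar>\<alpha> g - \<mu> g\<bar> < \<epsilon>/2" using ex by blast
      obtain p where pa: "\<alpha> = rep n p" and p1: "wt n p" using \<alpha>(1) by (auto simp: AA_eq)
      have p: "wt n p" "\<forall>f\<in>Fs. \<bar>rep n p (Gv \<nu> f) - \<mu> (Gv \<nu> f)\<bar> < \<epsilon>/2"
        using p1 \<alpha>(2) pa by auto
      let ?H = "(\<lambda>(x,f). restrict (\<lambda>y. f (hat x y)) TT) ` (TT_n n \<times> Fs)"
      have Hfin: "finite ?H" using F(1) by (simp add: finite_TT_n)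
      have Hsub: "?H \<subseteq> linfty"
      proof
        fix h assume "h \<in> ?H"
        then obtain x f where xf: "x \<in> TT_n n" "f \<in> Fs" "h = restrict (\<lambda>y. f (hat x y)) TT" by auto
        have "f \<in> linfty" using xf(2) F(2) by blast
        then show "h \<in> linfty" using inner_linfty TT_n_TT[OF xf(1)] xf(3) by blast
      qed
      have ev2: "eventually (\<lambda>m. \<exists>\<beta>\<in>AA m. \<forall>h\<in>?H. \<bar>\<beta> h - \<nu> h\<bar> < \<epsilon>/2) (FU U)"
        by (rule AU_D[OF U nu Hfin Hsub]) (use e in simp)
      then show ?thesis
      proof (rule eventually_mono)
        fix m assume "\<exists>\<beta>\<in>AA m. \<forall>h\<in>?H. \<bar>\<beta> h - \<nu> h\<bar> < \<epsilon>/2"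
        then obtain \<beta> where \<beta>: "\<beta> \<in> AA m" "\<forall>h\<in>?H. \<bar>\<beta> h - \<nu> h\<bar> < \<epsilon>/2" by blast
        obtain q where qb: "\<beta> = rep m q" and q1: "wt m q" using \<beta>(1) by (auto simp: AA_eq)
        have q: "wt m q" "\<forall>h\<in>?H. \<bar>rep m q h - \<nu> h\<bar> < \<epsilon>/2"
          using q1 \<beta>(2) qb by auto
        obtain r where r: "hatm (rep n p) (rep m q) = rep (n + m) r" "wt (n + m) r"
          using hatm_rep[OF p(1) q(1)] by blast
        have "\<bar>hatm (rep n p) (rep m q) f - hatm \<mu> \<nu> f\<bar> < \<epsilon>" if fF: "f \<in> Fs" for f
        proof -
          have fl: "f \<in> linfty" using fF F(2) by blast
          let ?h = "\<lambda>x. restrict (\<lambda>y. f (hat x y)) TT"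
          have A: "hatm (rep n p) (rep m q) f = (\<Sum>x\<in>TT_n n. p x * rep m q (?h x))"
            by (rule hatm_rep_eval[OF fl rep_PrT[OF q(1)]])
          have B: "rep n p (Gv \<nu> f) = (\<Sum>x\<in>TT_n n. p x * \<nu> (?h x))"
            using Gv_linfty[OF nuP fl]
            by (auto simp: rep_eval Gv_def dest: TT_n_TT intro!: sum.cong)
          have "\<bar>hatm (rep n p) (rep m q) f - rep n p (Gv \<nu> f)\<bar>
                = \<bar>\<Sum>x\<in>TT_n n. p x * (rep m q (?h x) - \<nu> (?h x))\<bar>"
            by (simp add: A B sum_subtractf right_diff_distrib)
          also have "\<dots> \<le> (\<Sum>x\<in>TT_n n. \<bar>p x * (rep m q (?h x) - \<nu> (?h x))\<bar>)"
            by (rule sum_abs)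
          also have "\<dots> \<le> (\<Sum>x\<in>TT_n n. p x * (\<epsilon>/2))"
          proof (rule sum_mono)
            fix x assume x: "x \<in> TT_n n"
            have "?h x \<in> ?H" by (rule image_eqI[where x="(x,f)"]) (simp_all add: x fF)
            then have "\<bar>rep m q (?h x) - \<nu> (?h x)\<bar> < \<epsilon>/2" using q(2) by blast
            then have "\<bar>rep m q (?h x) - \<nu> (?h x)\<bar> \<le> \<epsilon>/2" by simp
            moreover have "0 \<le> p x" using p(1) x by (simp add: wt_def)
            ultimately have "p x * \<bar>rep m q (?h x) - \<nu> (?h x)\<bar> \<le> p x * (\<epsilon>/2)"
              by (rule mult_left_mono)
            then show "\<bar>p x * (rep m q (?h x) - \<nu> (?h x))\<bar> \<le> p x * (\<epsilon>/2)"
              using \<open>0 \<le> p x\<close> by (simp only: abs_mult abs_of_nonneg)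
          qed
          also have "\<dots> = (\<Sum>x\<in>TT_n n. p x) * (\<epsilon>/2)" by (rule sum_distrib_right[symmetric])
          also have "\<dots> = \<epsilon>/2" using p(1) by (simp add: wt_def)
          finally have 1: "\<bar>hatm (rep n p) (rep m q) f - rep n p (Gv \<nu> f)\<bar> \<le> \<epsilon>/2" .
          have 2: "\<bar>rep n p (Gv \<nu> f) - hatm \<mu> \<nu> f\<bar> < \<epsilon>/2"
            using p(2) fF fl by (simp add: hatm_eq)
          show ?thesis using 1 2 by linarith
        qed
        then have "\<forall>f\<in>Fs. \<bar>rep (n + m) r f - hatm \<mu> \<nu> f\<bar> < \<epsilon>" using r(1) by simp
        moreover have "rep (n + m) r \<in> AA (n + m)" using r(2) by (auto simp: AA_eq)
        ultimately show "?P (n + m)" by blast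
      qed
    qed
    have "eventually (\<lambda>n. eventually (\<lambda>m. ?P (n + m)) (FU U)) (FU U)"
      using ev1 by (rule eventually_mono) (rule step)
    then show "eventually ?P (FU U)" by (rule idem_ev[OF U I])
  qed
qed

definition Dn :: "nat \<Rightarrow> (nat \<Rightarrow> real) set" where
  "Dn n = {x. (\<Sum>i\<le>n. x i ^ 2) \<le> 1 \<and> (\<forall>i>n. x i = 0)}"

abbreviation Dtop :: "nat \<Rightarrow> (nat \<Rightarrow> real) topology" where
  "Dtop n \<equiv> subtopology (powertop_real UNIV) (Dn n)"

lemma topspace_nsphere': "topspace (nsphere n) = {x. (\<Sum>i\<le>n. x i ^ 2) = 1 \<and> (\<forall>i>n. x i = 0)}"
  by (simp add: nsphere)

lemma disc_brouwer:
  assumes g: "continuous_map (Dtop n) (Dtop n) g"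
  shows "\<exists>x\<in>Dn n. g x = x"
proof (rule ccontr)
  assume "\<not> ?thesis"
  then have nofix: "\<And>x. x \<in> Dn n \<Longrightarrow> g x \<noteq> x" by blast
  define \<psi> where "\<psi> = (\<lambda>t::real. min 1 (2 - 2*t))"
  define \<phi> where "\<phi> = (\<lambda>t::real. min 1 (2*t))"
  define m where "m = (\<lambda>(t::real, x::nat\<Rightarrow>real) (k::nat). \<psi> t * x k)"
  define h where "h = (\<lambda>z i. \<psi> (fst z) * snd z i - \<phi> (fst z) * g (m z) i)"
  let ?Y = "subtopology (Euclidean_space(Suc n)) (- {\<lambda>i. 0})"
  let ?T01 = "top_of_set {0..1::real}"
  let ?P = "prod_topology ?T01 (nsphere n)"
  let ?g = "\<lambda>x i. x i / sqrt(\<Sum>j\<le>n. x j ^ 2)"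
  have gD: "g x \<in> Dn n" if "x \<in> Dn n" for x
    using g that by (auto simp: continuous_map_def)
  have tsP: "topspace ?P = {0..1} \<times> topspace (nsphere n)"
    by simp
  have cfst: "continuous_map ?P euclideanreal (\<lambda>z. fst z)"
    by (intro continuous_map_into_fulltopology [OF continuous_map_fst])
  have csnd: "continuous_map ?P euclideanreal (\<lambda>z. snd z k)" for k
  proof -
    have "continuous_map ?P euclideanreal ((\<lambda>x. x k) \<circ> snd)"
      by (intro continuous_map_compose[OF continuous_map_snd] continuous_map_nsphere_projection)
    then show ?thesis by (simp add: o_def)
  qed
  have cpsi: "continuous_map ?P euclideanreal (\<lambda>z. \<psi> (fst z))"
    unfolding \<psi>_def by (intro continuous_intros cfst)
  have cphi: "continuous_map ?P euclideanreal (\<lambda>z. \<phi> (fst z))"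
    unfolding \<phi>_def by (intro continuous_intros cfst)
  have mD: "m z \<in> Dn n" if "z \<in> topspace ?P" for z
  proof -
    obtain t x where z: "z = (t,x)" by (cases z)
    have t: "0 \<le> t" "t \<le> 1" and x: "(\<Sum>i\<le>n. x i ^ 2) = 1" "\<forall>i>n. x i = 0"
      using that by (auto simp: z topspace_nsphere')
    have p0: "0 \<le> \<psi> t" "\<psi> t \<le> 1" using t by (auto simp: \<psi>_def)
    have "(\<Sum>i\<le>n. (\<psi> t * x i) ^ 2) = (\<psi> t)^2 * (\<Sum>i\<le>n. x i ^ 2)"
      by (simp add: power_mult_distrib sum_distrib_left)
    also have "\<dots> \<le> 1" using x p0 by (simp add: power_le_one)
    finally show ?thesis using x by (simp add: z m_def Dn_def)
  qed
  have cm: "continuous_map ?P (Dtop n) m"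
  proof -
    have "continuous_map ?P euclideanreal (\<lambda>z. m z k)" for k
    proof -
      have "continuous_map ?P euclideanreal (\<lambda>z. \<psi> (fst z) * snd z k)"
        by (intro continuous_intros cpsi csnd)
      then show ?thesis by (simp add: m_def case_prod_unfold)
    qed
    then show ?thesis
      using mD by (auto simp: continuous_map_in_subtopology continuous_map_componentwise_UNIV)
  qed
  have cgm: "continuous_map ?P euclideanreal (\<lambda>z. g (m z) i)" for i
  proof -
    have "continuous_map ?P euclideanreal ((\<lambda>x. x i) \<circ> g \<circ> m)"
    proof -
      have pr: "continuous_map (Dtop n) euclideanreal (\<lambda>x. x i)"
        by (rule continuous_map_from_subtopology[OF continuous_map_product_projection]) simp
      show ?thesis using continuous_map_compose[OF cm continuous_map_compose[OF g pr]]
        by (simp add: o_assoc)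
    qed
    then show ?thesis by (simp add: o_def)
  qed
  have ch: "continuous_map ?P ?Y h"
  proof -
    have "continuous_map ?P euclideanreal (\<lambda>z. h z k)" for k
      unfolding h_def by (intro continuous_intros cpsi cphi csnd cgm)
    moreover have "h z \<in> {x. \<forall>i\<ge>Suc n. x i = 0}" if "z \<in> topspace ?P" for z
    proof -
      have "m z \<in> Dn n" using mD that by blast
      then have "g (m z) \<in> Dn n" by (rule gD)
      then show ?thesis using that by (auto simp: h_def Dn_def topspace_nsphere')
    qed
    moreover have "h z \<noteq> (\<lambda>i. 0)" if "z \<in> topspace ?P" for z
    proof
      assume h0: "h z = (\<lambda>i. 0)"
      obtain t x where z: "z = (t,x)" by (cases z)
      have t: "0 \<le> t" "t \<le> 1" and x: "(\<Sum>i\<le>n. x i ^ 2) = 1" "\<forall>i>n. x i = 0"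
        using that by (auto simp: z topspace_nsphere')
      have eq: "\<psi> t * x i = \<phi> t * g (m z) i" for i
        using fun_cong[OF h0, of i] by (simp add: h_def z)
      show False
      proof (cases "\<phi> t < 1")
        case True
        then have "t < 1/2" by (auto simp: \<phi>_def)
        then have ps: "\<psi> t = 1" by (auto simp: \<psi>_def)
        have p0: "0 \<le> \<phi> t" using t by (auto simp: \<phi>_def)
        have gmD: "g (m z) \<in> Dn n" using gD mD that by blast
        have "1 = (\<Sum>i\<le>n. x i ^ 2)" using x by simp
        also have "\<dots> = (\<Sum>i\<le>n. (\<phi> t * g (m z) i) ^ 2)"
          by (rule sum.cong[OF refl]) (metis eq ps mult_1_left)
        also have "\<dots> = (\<phi> t)^2 * (\<Sum>i\<le>n. g (m z) i ^ 2)"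
          by (simp add: power_mult_distrib sum_distrib_left)
        also have "\<dots> \<le> (\<phi> t)^2 * 1"
          using gmD by (intro mult_left_mono) (auto simp: Dn_def)
        also have "\<dots> < 1" using True p0
          using power_strict_mono[OF True p0, of 2] by simp
        finally show False by simp
      next
        case False
        then have ph: "\<phi> t = 1" by (auto simp: \<phi>_def)
        have "g (m z) i = m z i" for i
          using eq[of i] ph unfolding m_def z by simp
        then have "g (m z) = m z" by blast
        then show False using nofix mD that by blast
      qed
    qed
    ultimately show ?thesis
      unfolding Euclidean_space_def continuous_map_in_subtopology continuous_map_componentwise_UNIV
      by (force simp flip: image_subset_iff_funcset)
  qed
  have cg: "continuous_map ?Y (nsphere n) ?g"
  proof -
    have *: "\<lbrakk>\<forall>i\<ge>Suc n. x i = 0; x \<noteq> (\<lambda>i. 0)\<rbrakk> \<Longrightarrow> (\<Sum>j\<le>n. (x j)\<^sup>2) \<noteq> 0" for x :: "nat \<Rightarrow> real"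
      by (force simp: fun_eq_iff not_less_eq_eq sum_nonneg_eq_0_iff)
    show ?thesis
      apply (simp add: Euclidean_space_def continuous_map_in_subtopology continuous_map_componentwise_UNIV
          nsphere continuous_map_componentwise subtopology_subtopology)
      apply (intro conjI allI continuous_intros continuous_map_from_subtopology [OF continuous_map_product_projection])
        apply (simp_all add: *)
      apply (force simp: sum_nonneg fun_eq_iff not_less_eq_eq sum_nonneg_eq_0_iff power_divide simp flip: sum_divide_distrib)
      done
  qed
  have "homotopic_with (\<lambda>x. True) (nsphere n) (nsphere n) id (\<lambda>x. ?g (\<lambda>i. - g (\<lambda>k. 0) i))"
  proof -
    have 1: "continuous_map ?P (nsphere n) (?g \<circ> h)"
      by (rule continuous_map_compose[OF ch cg])
    have 2: "(?g \<circ> h) (0, x) = id x" if "x \<in> topspace (nsphere n)" for x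
    proof -
      have h0: "h (0,x) = x" by (simp add: h_def \<psi>_def \<phi>_def fun_eq_iff)
      have "(\<Sum>j\<le>n. x j ^ 2) = 1" using that by (simp add: topspace_nsphere')
      then show ?thesis by (simp add: h0)
    qed
    have 3: "(?g \<circ> h) (1, x) = ?g (\<lambda>i. - g (\<lambda>k. 0) i)" for x
    proof -
      have "m (1,x) = (\<lambda>k. 0)" by (simp add: m_def \<psi>_def)
      then have "h (1,x) = (\<lambda>i. - g (\<lambda>k. 0) i)" by (simp add: h_def \<psi>_def \<phi>_def)
      then show ?thesis by simp
    qed
    have "\<exists>k. continuous_map (prod_topology (subtopology euclideanreal {0..1}) (nsphere n)) (nsphere n) k \<and>
       (\<forall>x\<in>topspace (nsphere n). k (0,x) = id x) \<and> (\<forall>x\<in>topspace (nsphere n). k (1,x) = ?g (\<lambda>i. - g (\<lambda>k. 0) i)) \<and> (\<forall>t\<in>{0..1}. True)"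
      using 1 2 3 by blast
    then show ?thesis by (subst homotopic_with) auto
  qed
  then have "contractible_space (nsphere n)"
    unfolding contractible_space_def by blast
  then show False using non_contractible_space_nsphere by blast
qed

lemma proj_Dtop [continuous_intros]: "continuous_map (Dtop n) euclideanreal (\<lambda>x. x i)"
  by (rule continuous_map_from_subtopology[OF continuous_map_product_projection]) simp

definition Ssum :: "nat \<Rightarrow> (nat \<Rightarrow> real) \<Rightarrow> real" where
  "Ssum n x = (\<Sum>i\<le>n. max (x i) 0)"

definition rr :: "nat \<Rightarrow> (nat \<Rightarrow> real) \<Rightarrow> nat \<Rightarrow> real" where
  "rr n x i = (max (x i) 0 + max (1 - Ssum n x) 0 / real (Suc n)) / max (Ssum n x) 1"

lemma rr_nonneg: "0 \<le> rr n x i"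
  unfolding rr_def by (intro divide_nonneg_pos add_nonneg_nonneg) auto

lemma rr_sum: "(\<Sum>i\<le>n. rr n x i) = 1"
proof -
  have "(\<Sum>i\<le>n. max (x i) 0 + max (1 - Ssum n x) 0 / real (Suc n))
       = Ssum n x + max (1 - Ssum n x) 0"
    by (simp add: sum.distrib Ssum_def)
  also have "\<dots> = max (Ssum n x) 1" by linarith
  finally show ?thesis
    unfolding rr_def by (simp flip: sum_divide_distrib)
qed

lemma rr_id:
  assumes "\<forall>i\<le>n. 0 \<le> x i" "(\<Sum>i\<le>n. x i) = 1" "i \<le> n"
  shows "rr n x i = x i"
proof -
  have "Ssum n x = 1" unfolding Ssum_def using assms(1,2)
    by (metis (no_types, lifting) atMost_iff max.absorb1 sum.cong)
  then show ?thesis using assms by (simp add: rr_def)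
qed

lemma cont_rr: "continuous_map (Dtop n) euclideanreal (\<lambda>x. rr n x i)"
proof -
  have ne: "max (Ssum n x) 1 \<noteq> 0" for x by linarith
  show ?thesis unfolding rr_def
    by (intro continuous_intros ne) (simp_all add: Ssum_def continuous_intros)
qed

lemma magma_fp_nat:
  fixes c :: "nat \<Rightarrow> nat \<Rightarrow> nat"
  assumes c: "\<forall>i\<le>n. \<forall>j\<le>n. c i j \<le> n"
  shows "\<exists>x::nat\<Rightarrow>real. (\<forall>i\<le>n. 0 \<le> x i) \<and> (\<Sum>i\<le>n. x i) = 1 \<and>
     (\<forall>l\<le>n. x l = (\<Sum>i\<le>n. \<Sum>j\<le>n. if c i j = l then x i * x j else 0))"
proof -
  define G where "G = (\<lambda>x l. if l \<le> n then (\<Sum>i\<le>n. \<Sum>j\<le>n. if c i j = l then rr n x i * rr n x j else 0) else 0)"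
  have Gnn: "0 \<le> G x l" for x l
    unfolding G_def by (auto intro!: sum_nonneg mult_nonneg_nonneg rr_nonneg)
  have Gsum: "(\<Sum>l\<le>n. G x l) = 1" for x
  proof -
    have "(\<Sum>l\<le>n. G x l) = (\<Sum>l\<le>n. \<Sum>i\<le>n. \<Sum>j\<le>n. if c i j = l then rr n x i * rr n x j else 0)"
      unfolding G_def by (intro sum.cong) auto
    also have "\<dots> = (\<Sum>i\<le>n. \<Sum>l\<le>n. \<Sum>j\<le>n. if c i j = l then rr n x i * rr n x j else 0)"
      by (rule sum.swap)
    also have "\<dots> = (\<Sum>i\<le>n. \<Sum>j\<le>n. \<Sum>l\<le>n. if c i j = l then rr n x i * rr n x j else 0)"
      by (intro sum.cong refl sum.swap)
    also have "\<dots> = (\<Sum>i\<le>n. \<Sum>j\<le>n. rr n x i * rr n x j)"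
      using c by (intro sum.cong refl) (simp add: sum.delta)
    also have "\<dots> = (\<Sum>i\<le>n. rr n x i) * (\<Sum>j\<le>n. rr n x j)"
      by (simp add: sum_product)
    finally show ?thesis by (simp add: rr_sum)
  qed
  have Gle: "G x l \<le> 1" for x l
  proof (cases "l \<le> n")
    case True
    have "G x l \<le> (\<Sum>l\<le>n. G x l)"
      using True by (intro member_le_sum Gnn) auto
    then show ?thesis by (simp add: Gsum)
  qed (simp add: G_def)
  have GD: "G x \<in> Dn n" for x
  proof -
    have "(\<Sum>l\<le>n. G x l ^ 2) \<le> (\<Sum>l\<le>n. G x l)"
      by (intro sum_mono) (simp add: power2_eq_square Gnn Gle mult_le_cancel_right1 mult_left_le)
    then have "(\<Sum>l\<le>n. G x l ^ 2) \<le> 1" by (simp add: Gsum)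
    moreover have "\<forall>i>n. G x i = 0" by (simp add: G_def)
    ultimately show ?thesis by (simp add: Dn_def)
  qed
  have cG: "continuous_map (Dtop n) (Dtop n) G"
  proof -
    have "continuous_map (Dtop n) euclideanreal (\<lambda>x. G x l)" for l
      unfolding G_def by (cases "l \<le> n") (simp_all add: continuous_intros cont_rr)
    then show ?thesis
      using GD by (auto simp: continuous_map_in_subtopology continuous_map_componentwise_UNIV)
  qed
  obtain x where x: "x \<in> Dn n" "G x = x"
    using disc_brouwer[OF cG] by blast
  have xnn: "\<forall>i\<le>n. 0 \<le> x i" using Gnn x(2) by metis
  have xs: "(\<Sum>i\<le>n. x i) = 1" using Gsum x(2) by metis
  have rx: "rr n x i = x i" if "i \<le> n" for i using rr_id[OF xnn xs that] .
  have "\<forall>l\<le>n. x l = (\<Sum>i\<le>n. \<Sum>j\<le>n. if c i j = l then x i * x j else 0)"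
  proof (intro allI impI)
    fix l assume l: "l \<le> n"
    have "x l = G x l" using x(2) by simp
    also have "\<dots> = (\<Sum>i\<le>n. \<Sum>j\<le>n. if c i j = l then rr n x i * rr n x j else 0)"
      using l by (simp add: G_def)
    also have "\<dots> = (\<Sum>i\<le>n. \<Sum>j\<le>n. if c i j = l then x i * x j else 0)"
      by (rule sum.cong[OF refl], rule sum.cong[OF refl]) (simp add: rx)
    finally show "x l = (\<Sum>i\<le>n. \<Sum>j\<le>n. if c i j = l then x i * x j else 0)" .
  qed
  then have "(\<forall>i\<le>n. 0 \<le> x i) \<and> (\<Sum>i\<le>n. x i) = 1 \<and>
     (\<forall>l\<le>n. x l = (\<Sum>i\<le>n. \<Sum>j\<le>n. if c i j = l then x i * x j else 0))"
    using xnn xs by (intro conjI)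
  then show ?thesis by (rule exI[of _ x])
qed

lemma hatm_zo:
  assumes mu: "\<mu> \<in> PrT" and nu: "\<nu> \<in> PrT" and z1: "zo \<mu>" and z2: "zo \<nu>"
  shows "zo (hatm \<mu> \<nu>)"
  unfolding zo_def
proof
  fix E
  define E' where "E' = {x. meas \<nu> {y. hat x y \<in> E} = 1}"
  have "Gv \<nu> (restrict (indicator E) TT) = restrict (indicator E') TT"
    unfolding Gv_def
  proof (rule restrict_ext)
    fix x assume x: "x \<in> TT"
    have "restrict (\<lambda>y. restrict (indicator E :: real set \<Rightarrow> real) TT (hat x y)) TT
        = restrict (indicator {y. hat x y \<in> E} :: real set \<Rightarrow> real) TT"
      by (rule restrict_ext) (use x hat_TT in \<open>simp add: indicator_def\<close>)
    then have "\<nu> (restrict (\<lambda>y. restrict (indicator E) TT (hat x y)) TT) = meas \<nu> {y. hat x y \<in> E}"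
      by (simp add: meas_def)
    moreover have "meas \<nu> {y. hat x y \<in> E} \<in> {0,1}" using z2 by (simp add: zo_def)
    ultimately show "\<nu> (restrict (\<lambda>y. restrict (indicator E) TT (hat x y)) TT) = indicator E' x"
      by (auto simp: E'_def indicator_def)
  qed
  then have "meas (hatm \<mu> \<nu>) E = meas \<mu> E'" using linfty_ind by (simp add: meas_def hatm_eq)
  then show "meas (hatm \<mu> \<nu>) E \<in> {0,1}" using z1 by (simp add: zo_def)
qed

definition cmb :: "'i set \<Rightarrow> ('i \<Rightarrow> real) \<Rightarrow> ('i \<Rightarrow> ((real set \<Rightarrow> real) \<Rightarrow> real)) \<Rightarrow> ((real set \<Rightarrow> real) \<Rightarrow> real)" where
  "cmb J a P = (\<lambda>f\<in>linfty. \<Sum>i\<in>J. a i * P i f)"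

lemma cmb_PrT:
  assumes J: "finite J" and P: "\<forall>i\<in>J. P i \<in> PrT" and a: "\<forall>i\<in>J. 0 \<le> a i" "(\<Sum>i\<in>J. a i) = 1"
  shows "cmb J a P \<in> PrT"
proof -
  have "cmb J a P \<in> linfty \<rightarrow>\<^sub>E UNIV" by (simp add: cmb_def)
  moreover have "cmb J a P (restrict (\<lambda>t. a' * f t + b * g t) TT) = a' * cmb J a P f + b * cmb J a P g"
    if fg: "f \<in> linfty" "g \<in> linfty" for f g a' b
  proof -
    have "cmb J a P (restrict (\<lambda>t. a' * f t + b * g t) TT) = (\<Sum>i\<in>J. a i * P i (restrict (\<lambda>t. a' * f t + b * g t) TT))"
      using linfty_comb[OF fg] by (simp add: cmb_def)
    also have "\<dots> = (\<Sum>i\<in>J. a' * (a i * P i f) + b * (a i * P i g))"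
    proof (rule sum.cong[OF refl])
      fix i assume "i \<in> J"
      then have "P i (restrict (\<lambda>t. a' * f t + b * g t) TT) = a' * P i f + b * P i g"
        using P PrT_D(2) fg by blast
      then show "a i * P i (restrict (\<lambda>t. a' * f t + b * g t) TT) = a' * (a i * P i f) + b * (a i * P i g)"
        by (simp add: algebra_simps)
    qed
    also have "\<dots> = a' * (\<Sum>i\<in>J. a i * P i f) + b * (\<Sum>i\<in>J. a i * P i g)"
      by (simp add: sum.distrib sum_distrib_left)
    finally show ?thesis using fg by (simp add: cmb_def)
  qed
  moreover have "0 \<le> cmb J a P f" if fp: "f \<in> linfty" "\<forall>t\<in>TT. 0 \<le> f t" for f
  proof -
    have "0 \<le> (\<Sum>i\<in>J. a i * P i f)"
    proof (rule sum_nonneg)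
      fix i assume i: "i \<in> J"
      have "0 \<le> P i f" using P i PrT_D(3) fp by blast
      then show "0 \<le> a i * P i f" using a(1) i by simp
    qed
    then show ?thesis using fp by (simp add: cmb_def)
  qed
  moreover have "cmb J a P (restrict (\<lambda>_. 1) TT) = 1"
  proof -
    have "(\<Sum>i\<in>J. a i * P i (restrict (\<lambda>_. 1) TT)) = (\<Sum>i\<in>J. a i)"
      using P PrT_D(4) by (intro sum.cong) auto
    then show ?thesis using linfty_one a(2) by (simp add: cmb_def)
  qed
  ultimately show ?thesis unfolding PrT_def by blast
qed

lemma cmb_AU:
  assumes U: "ultrafilter_N U" and J: "finite J" and P: "\<forall>i\<in>J. P i \<in> AU U"
    and a: "\<forall>i\<in>J. 0 \<le> a i" "(\<Sum>i\<in>J. a i) = 1"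
  shows "cmb J a P \<in> AU U"
proof -
  have PP: "\<forall>i\<in>J. P i \<in> PrT" using P by (simp add: AU_def)
  show ?thesis
  proof (rule AU_I[OF U cmb_PrT[OF J PP a]])
    fix Fs \<epsilon> assume F: "finite Fs" "Fs \<subseteq> linfty" and e: "(0::real) < \<epsilon>"
    have "\<forall>i\<in>J. eventually (\<lambda>m. \<exists>\<beta>\<in>AA m. \<forall>f\<in>Fs. \<bar>\<beta> f - P i f\<bar> < \<epsilon>/2) (FU U)"
    proof
      fix i assume "i \<in> J"
      then show "eventually (\<lambda>m. \<exists>\<beta>\<in>AA m. \<forall>f\<in>Fs. \<bar>\<beta> f - P i f\<bar> < \<epsilon>/2) (FU U)"
        using P by (intro AU_D[OF U _ F]) (use e in auto)
    qed
    then have "eventually (\<lambda>m. \<forall>i\<in>J. \<exists>\<beta>\<in>AA m. \<forall>f\<in>Fs. \<bar>\<beta> f - P i f\<bar> < \<epsilon>/2) (FU U)"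
      by (rule eventually_ball_finite[OF J])
    then show "eventually (\<lambda>m. \<exists>\<alpha>\<in>AA m. \<forall>f\<in>Fs. \<bar>\<alpha> f - cmb J a P f\<bar> < \<epsilon>) (FU U)"
    proof (rule eventually_mono)
      fix m assume H: "\<forall>i\<in>J. \<exists>\<beta>\<in>AA m. \<forall>f\<in>Fs. \<bar>\<beta> f - P i f\<bar> < \<epsilon>/2"
      have "\<forall>i\<in>J. \<exists>q. wt m q \<and> (\<forall>f\<in>Fs. \<bar>rep m q f - P i f\<bar> < \<epsilon>/2)"
      proof
        fix i assume "i \<in> J"
        then obtain \<beta> where \<beta>: "\<beta> \<in> AA m" "\<forall>f\<in>Fs. \<bar>\<beta> f - P i f\<bar> < \<epsilon>/2" using H by blast
        obtain q where "\<beta> = rep m q" "wt m q" using \<beta>(1) by (auto simp: AA_eq)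
        then show "\<exists>q. wt m q \<and> (\<forall>f\<in>Fs. \<bar>rep m q f - P i f\<bar> < \<epsilon>/2)" using \<beta>(2) by blast
      qed
      then obtain Q where Q: "\<forall>i\<in>J. wt m (Q i) \<and> (\<forall>f\<in>Fs. \<bar>rep m (Q i) f - P i f\<bar> < \<epsilon>/2)"
        by (rule bchoice[THEN exE]) blast
      define r where "r = (\<lambda>t. \<Sum>i\<in>J. a i * Q i t)"
      have w: "wt m r"
      proof -
        have "\<forall>t\<in>TT_n m. 0 \<le> r t"
          using Q a(1) by (auto simp: r_def wt_def intro!: sum_nonneg)
        moreover have "(\<Sum>t\<in>TT_n m. r t) = (\<Sum>i\<in>J. a i * (\<Sum>t\<in>TT_n m. Q i t))"
          unfolding r_def by (simp add: sum_distrib_left sum.swap[of _ "TT_n m"])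
        moreover have "\<dots> = (\<Sum>i\<in>J. a i)"
          using Q by (intro sum.cong) (auto simp: wt_def)
        ultimately show ?thesis using a(2) by (simp add: wt_def)
      qed
      have rv: "rep m r f = (\<Sum>i\<in>J. a i * rep m (Q i) f)" if fl: "f \<in> linfty" for f
      proof -
        have "rep m r f = (\<Sum>t\<in>TT_n m. \<Sum>i\<in>J. a i * (Q i t * f t))"
          using fl by (simp add: rep_eval r_def sum_distrib_right mult.assoc)
        also have "\<dots> = (\<Sum>i\<in>J. \<Sum>t\<in>TT_n m. a i * (Q i t * f t))" by (rule sum.swap)
        also have "\<dots> = (\<Sum>i\<in>J. a i * rep m (Q i) f)"
          using fl by (simp add: rep_eval sum_distrib_left)
        finally show ?thesis .
      qed
      have "\<bar>rep m r f - cmb J a P f\<bar> < \<epsilon>" if fF: "f \<in> Fs" for f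
      proof -
        have fl: "f \<in> linfty" using fF F(2) by blast
        have "\<bar>rep m r f - cmb J a P f\<bar> = \<bar>\<Sum>i\<in>J. a i * (rep m (Q i) f - P i f)\<bar>"
          using fl by (simp add: rv cmb_def sum_subtractf right_diff_distrib)
        also have "\<dots> \<le> (\<Sum>i\<in>J. \<bar>a i * (rep m (Q i) f - P i f)\<bar>)" by (rule sum_abs)
        also have "\<dots> \<le> (\<Sum>i\<in>J. a i * (\<epsilon>/2))"
        proof (rule sum_mono)
          fix i assume i: "i \<in> J"
          have "\<bar>rep m (Q i) f - P i f\<bar> < \<epsilon>/2" using Q i fF by blast
          then have "\<bar>rep m (Q i) f - P i f\<bar> \<le> \<epsilon>/2" by simp
          moreover have "0 \<le> a i" using a(1) i by blast
          ultimately have "a i * \<bar>rep m (Q i) f - P i f\<bar> \<le> a i * (\<epsilon>/2)" by (rule mult_left_mono)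
          then show "\<bar>a i * (rep m (Q i) f - P i f)\<bar> \<le> a i * (\<epsilon>/2)"
            using \<open>0 \<le> a i\<close> by (simp only: abs_mult abs_of_nonneg)
        qed
        also have "\<dots> = (\<Sum>i\<in>J. a i) * (\<epsilon>/2)" by (rule sum_distrib_right[symmetric])
        also have "\<dots> < \<epsilon>" using a(2) e by simp
        finally show ?thesis .
      qed
      moreover have "rep m r \<in> AA m" using w by (auto simp: AA_eq)
      ultimately show "\<exists>\<alpha>\<in>AA m. \<forall>f\<in>Fs. \<bar>\<alpha> f - cmb J a P f\<bar> < \<epsilon>" by blast
    qed
  qed
qed

lemma meas_cmb: "meas (cmb J a P) E = (\<Sum>i\<in>J. a i * meas (P i) E)"
  using linfty_ind by (simp add: meas_def cmb_def)

lemma hatm_cmb: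
  assumes J: "finite J" and P: "\<forall>i\<in>J. P i \<in> PrT" and a: "\<forall>i\<in>J. 0 \<le> a i" "(\<Sum>i\<in>J. a i) = 1"
  shows "meas (hatm (cmb J a P) (cmb J a P)) E = (\<Sum>i\<in>J. \<Sum>j\<in>J. a i * a j * meas (hatm (P i) (P j)) E)"
proof -
  let ?mu = "cmb J a P"
  let ?e = "restrict (indicator E) TT"
  have muP: "?mu \<in> PrT" by (rule cmb_PrT[OF J P a])
  have "meas (hatm ?mu ?mu) E = ?mu (Gv ?mu ?e)" using linfty_ind by (simp add: meas_def hatm_eq)
  also have "\<dots> = (\<Sum>i\<in>J. a i * P i (Gv ?mu ?e))"
    using Gv_linfty[OF muP linfty_ind] by (simp add: cmb_def)
  also have "\<dots> = (\<Sum>i\<in>J. a i * (\<Sum>j\<in>J. a j * meas (hatm (P i) (P j)) E))"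
  proof (rule sum.cong[OF refl])
    fix i assume i: "i \<in> J"
    have "P i (Gv ?mu ?e) = (\<Sum>j\<in>J. a j * P i (Gv (P j) ?e))"
      unfolding Gv_def[of ?mu ?e]
    proof (rule PrT_sum)
      show "P i \<in> PrT" using P i by blast
      show "finite J" by (rule J)
      show "\<forall>j\<in>J. Gv (P j) ?e \<in> linfty" using P Gv_linfty linfty_ind by blast
    next
      fix x assume x: "x \<in> TT"
      show "?mu (restrict (\<lambda>y. ?e (hat x y)) TT) = (\<Sum>j\<in>J. a j * Gv (P j) ?e x)"
        using inner_linfty[OF linfty_ind x] x by (simp add: cmb_def Gv_def)
    qed
    also have "\<dots> = (\<Sum>j\<in>J. a j * meas (hatm (P i) (P j)) E)"
      using linfty_ind by (simp add: meas_def hatm_eq)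
    finally show "a i * P i (Gv ?mu ?e) = a i * (\<Sum>j\<in>J. a j * meas (hatm (P i) (P j)) E)" by simp
  qed
  also have "\<dots> = (\<Sum>i\<in>J. \<Sum>j\<in>J. a i * a j * meas (hatm (P i) (P j)) E)"
    by (simp add: sum_distrib_left mult.assoc)
  finally show ?thesis .
qed

lemma magma_fp:
  fixes J :: "'a set" and c :: "'a \<Rightarrow> 'a \<Rightarrow> 'a"
  assumes J: "finite J" "J \<noteq> {}" and cJ: "\<forall>i\<in>J. \<forall>j\<in>J. c i j \<in> J"
  shows "\<exists>y::'a \<Rightarrow> real. (\<forall>i\<in>J. 0 \<le> y i) \<and> (\<Sum>i\<in>J. y i) = 1 \<and>
           (\<forall>l\<in>J. y l = (\<Sum>i\<in>J. \<Sum>j\<in>J. if c i j = l then y i * y j else 0))"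
proof -
  obtain h where h: "bij_betw h {0..<card J} J" using ex_bij_betw_nat_finite[OF J(1)] by blast
  obtain n where n: "card J = Suc n" using J by (metis card_gt_0_iff gr0_conv_Suc)
  have "{0..<card J} = {..n}" using n by auto
  with h have hb: "bij_betw h {..n} J" by simp
  define g where "g = inv_into {..n} h"
  have gh: "g (h i) = i" if "i \<le> n" for i
    using bij_betw_inv_into_left[OF hb] that by (simp add: g_def)
  have hg: "h (g l) = l" if "l \<in> J" for l
    using bij_betw_inv_into_right[OF hb] that by (simp add: g_def)
  have gJ: "g l \<le> n" if "l \<in> J" for l
    using bij_betw_inv_into[OF hb] that by (auto simp: g_def dest: bij_betwE)
  have hJ: "h i \<in> J" if "i \<le> n" for i
    using hb that by (auto dest: bij_betwE)
  define c' where "c' = (\<lambda>i j. g (c (h i) (h j)))"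
  have "\<forall>i\<le>n. \<forall>j\<le>n. c' i j \<le> n" using cJ hJ gJ by (simp add: c'_def)
  from magma_fp_nat[OF this] obtain x :: "nat \<Rightarrow> real" where xall: "(\<forall>i\<le>n. 0 \<le> x i) \<and> (\<Sum>i\<le>n. x i) = 1 \<and>
    (\<forall>l\<le>n. x l = (\<Sum>i\<le>n. \<Sum>j\<le>n. if c' i j = l then x i * x j else 0))"
    by (rule exE)
  note x = conjunct1[OF xall] conjunct1[OF conjunct2[OF xall]] conjunct2[OF conjunct2[OF xall]]
  define y where "y = (\<lambda>l. x (g l))"
  have re: "(\<Sum>l\<in>J. F l) = (\<Sum>i\<le>n. F (h i))" for F :: "'a \<Rightarrow> real"
    using sum.reindex_bij_betw[OF hb, of F] by simp
  have yh: "y (h i) = x i" if "i \<le> n" for i using gh that by (simp add: y_def)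
  have y1: "\<forall>i\<in>J. 0 \<le> y i" using x(1) gJ by (simp add: y_def)
  have "(\<Sum>i\<in>J. y i) = (\<Sum>i\<le>n. y (h i))" by (rule re)
  also have "\<dots> = (\<Sum>i\<le>n. x i)" by (rule sum.cong) (auto simp: yh)
  finally have y2: "(\<Sum>i\<in>J. y i) = 1" using x(2) by simp
  have y3: "y l = (\<Sum>i\<in>J. \<Sum>j\<in>J. if c i j = l then y i * y j else 0)" if l: "l \<in> J" for l
  proof -
    have "y l = (\<Sum>i\<le>n. \<Sum>j\<le>n. if c' i j = g l then x i * x j else 0)"
      using x(3) gJ[OF l] by (simp add: y_def)
    also have "\<dots> = (\<Sum>i\<le>n. \<Sum>j\<le>n. if c (h i) (h j) = l then y (h i) * y (h j) else 0)"
    proof (intro sum.cong refl)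
      fix i j assume "i \<in> {..n}" "j \<in> {..n}"
      then have ij: "i \<le> n" "j \<le> n" by auto
      have cin: "c (h i) (h j) \<in> J" using cJ hJ ij by blast
      have "(c' i j = g l) \<longleftrightarrow> (c (h i) (h j) = l)"
        using hg[OF cin] hg[OF l] by (metis c'_def)
      then show "(if c' i j = g l then x i * x j else 0) = (if c (h i) (h j) = l then y (h i) * y (h j) else 0)"
        using yh ij by simp
    qed
    also have "\<dots> = (\<Sum>i\<in>J. \<Sum>j\<in>J. if c i j = l then y i * y j else 0)"
      by (simp add: re)
    finally show ?thesis .
  qed
  show ?thesis
    by (rule exI[of _ y]) (use y1 y2 y3 in blast)
qed

theorem proposition3p2:
  fixes B :: "real set set set" and U :: "nat set set"
  assumes "finite B" and "\<forall>E\<in>B. E \<subseteq> TT"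
    and "ultrafilter_N U" and "idempotent_N U"
  shows "\<exists>\<mu>\<in>AU U. \<forall>E\<in>B. meas (hatm \<mu> \<mu>) E = meas \<mu> E"
proof -
  note finB = assms(1) and U = assms(3) and I = assms(4)
  define Z where "Z = {p \<in> AU U. zo p}"
  define tau where "tau = (\<lambda>p. {E\<in>B. meas p E = 1})"
  define J where "J = tau ` Z"
  have mu0Z: "mu0 U \<in> Z" using mu0_AU[OF U] mu0_zo[OF U] by (simp add: Z_def)
  have finJ: "finite J"
  proof (rule finite_subset)
    show "J \<subseteq> Pow B" by (auto simp: J_def tau_def)
    show "finite (Pow B)" using finB by simp
  qed
  have Jne: "J \<noteq> {}" using mu0Z by (auto simp: J_def)
  define R where "R = (\<lambda>S. SOME p. p \<in> Z \<and> tau p = S)"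
  have R: "R S \<in> Z \<and> tau (R S) = S" if "S \<in> J" for S
  proof -
    have "\<exists>p. p \<in> Z \<and> tau p = S" using that by (auto simp: J_def)
    then show ?thesis unfolding R_def by (rule someI_ex)
  qed
  have ZP: "p \<in> PrT" if "p \<in> Z" for p using that by (simp add: Z_def AU_def)
  have hZ: "hatm p q \<in> Z" if "p \<in> Z" "q \<in> Z" for p q
    using that hatm_AU[OF U I] hatm_zo ZP by (simp add: Z_def)
  have mZ: "meas p E = (if E \<in> tau p then 1 else 0)" if "p \<in> Z" "E \<in> B" for p E
  proof -
    have "meas p E \<in> {0,1}" using that by (simp add: Z_def zo_def)
    then show ?thesis using that by (auto simp: tau_def)
  qed
  define c where "c = (\<lambda>S S'. tau (hatm (R S) (R S')))"
  have cJ: "\<forall>S\<in>J. \<forall>S'\<in>J. c S S' \<in> J"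
    using R hZ by (auto simp: c_def J_def)
  from magma_fp[OF finJ Jne cJ] obtain \<alpha> :: "real set set set \<Rightarrow> real" where \<alpha>all:
    "(\<forall>i\<in>J. 0 \<le> \<alpha> i) \<and> (\<Sum>i\<in>J. \<alpha> i) = 1 \<and>
     (\<forall>l\<in>J. \<alpha> l = (\<Sum>i\<in>J. \<Sum>j\<in>J. if c i j = l then \<alpha> i * \<alpha> j else 0))"
    by (rule exE)
  note \<alpha> = conjunct1[OF \<alpha>all] conjunct1[OF conjunct2[OF \<alpha>all]] conjunct2[OF conjunct2[OF \<alpha>all]]
  define \<mu> where "\<mu> = cmb J \<alpha> R"
  have RAU: "\<forall>S\<in>J. R S \<in> AU U" using R by (simp add: Z_def)
  have RP: "\<forall>S\<in>J. R S \<in> PrT" using R ZP by blast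
  have muAU: "\<mu> \<in> AU U" unfolding \<mu>_def by (rule cmb_AU[OF U finJ RAU \<alpha>(1,2)])
  have EQ: "meas (hatm \<mu> \<mu>) E = meas \<mu> E" if E: "E \<in> B" for E
  proof -
    let ?ind = "\<lambda>l. if E \<in> l then 1 else (0::real)"
    have "meas (hatm \<mu> \<mu>) E = (\<Sum>i\<in>J. \<Sum>j\<in>J. \<alpha> i * \<alpha> j * meas (hatm (R i) (R j)) E)"
      unfolding \<mu>_def by (rule hatm_cmb[OF finJ RP \<alpha>(1,2)])
    also have "\<dots> = (\<Sum>i\<in>J. \<Sum>j\<in>J. \<Sum>l\<in>J. (if c i j = l then \<alpha> i * \<alpha> j else 0) * ?ind l)"
    proof (intro sum.cong refl)
      fix i j assume ij: "i \<in> J" "j \<in> J"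
      have m: "meas (hatm (R i) (R j)) E = ?ind (c i j)"
        using mZ[OF hZ[OF conjunct1[OF R[OF ij(1)]] conjunct1[OF R[OF ij(2)]]] E] by (simp add: c_def)
      have cij: "c i j \<in> J" using cJ ij by blast
      have "(\<Sum>l\<in>J. (if c i j = l then \<alpha> i * \<alpha> j else 0) * ?ind l)
          = (\<Sum>l\<in>J. if c i j = l then \<alpha> i * \<alpha> j * ?ind l else 0)"
        by (rule sum.cong) auto
      also have "\<dots> = \<alpha> i * \<alpha> j * ?ind (c i j)"
        by (subst sum.delta'[OF finJ]) (simp only: cij if_True)
      finally have "(\<Sum>l\<in>J. (if c i j = l then \<alpha> i * \<alpha> j else 0) * ?ind l) = \<alpha> i * \<alpha> j * ?ind (c i j)" .
      then show "\<alpha> i * \<alpha> j * meas (hatm (R i) (R j)) E = (\<Sum>l\<in>J. (if c i j = l then \<alpha> i * \<alpha> j else 0) * ?ind l)"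
        using m by simp
    qed
    also have "\<dots> = (\<Sum>i\<in>J. \<Sum>l\<in>J. \<Sum>j\<in>J. (if c i j = l then \<alpha> i * \<alpha> j else 0) * ?ind l)"
      by (intro sum.cong refl sum.swap)
    also have "\<dots> = (\<Sum>l\<in>J. \<Sum>i\<in>J. \<Sum>j\<in>J. (if c i j = l then \<alpha> i * \<alpha> j else 0) * ?ind l)"
      by (rule sum.swap)
    also have "\<dots> = (\<Sum>l\<in>J. (\<Sum>i\<in>J. \<Sum>j\<in>J. if c i j = l then \<alpha> i * \<alpha> j else 0) * ?ind l)"
      by (simp add: sum_distrib_right)
    also have "\<dots> = (\<Sum>l\<in>J. \<alpha> l * meas (R l) E)"
    proof (rule sum.cong[OF refl])
      fix l assume l: "l \<in> J"
      have "meas (R l) E = ?ind l" using mZ[OF conjunct1[OF R[OF l]] E] R[OF l] by simp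
      then show "(\<Sum>i\<in>J. \<Sum>j\<in>J. if c i j = l then \<alpha> i * \<alpha> j else 0) * ?ind l = \<alpha> l * meas (R l) E"
        using \<alpha>(3) l by simp
    qed
    also have "\<dots> = meas \<mu> E" by (simp add: \<mu>_def meas_cmb)
    finally show ?thesis .
  qed
  show ?thesis
  proof (rule bexI[of _ \<mu>])
    show "\<forall>E\<in>B. meas (hatm \<mu> \<mu>) E = meas \<mu> E" using EQ by blast
    show "\<mu> \<in> AU U" by (rule muAU)
  qed
qed

end
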